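(* Let $\alpha>0$, $\beta>0$, $M\in\mathbb{R}$, and let $H:=\frac12\bigl(\frac{6\alpha}{\beta M^2}\bigr)^{1/3}$, $V:=MH$ (with the understanding that the canonical staircase $S_{H,V}$ is identically $0$ when $M=0$). Then the set of entire local minimizers of $\mathcal{G}(\alpha,\beta,Mx,\cdot,\cdot)$ coincides with the set $\mathrm{Obl}(H,V)$ of oblique translations of $S_{H,V}$ (in particular, when $M=0$ the only entire local minimizer is the zero function).
   Context: For a bounded interval $(a,b)$, $S((a,b))$ is the space of step functions with finitely many jumps (BV functions with zero diffuse derivative and finite jump set $S_u$), with $u(a),u(b)$ denoting the values near the endpoints; $S_{loc}(\mathbb{R})$ is the set of $u:\mathbb{R}\to\mathbb{R}$ whose restriction to every bounded interval lies in $S((a,b))$. $\mathcal{G}(\alpha,\beta,f,(a,b),u)=\alpha\,\#(S_u\cap(a,b))+\beta\int_a^b(u-f)^2dx$. A function $v\in S((a,b))$ is a local minimizer of $\mathcal{G}(\alpha,\beta,f,(a,b),\cdot)$ if $\mathcal{G}(\alpha,\beta,f,(a,b),v)\le\mathcal{G}(\alpha,\beta,f,(a,b),u)$ for all $u\in S((a,b))$ with $u(a)=v(a)$, $u(b)=v(b)$; $v\in S_{loc}(\mathbb{R})$ is an entire local minimizer if its restriction to every bounded interval is a local minimizer there. Here $f$ is $x\mapsto Mx$. Canonical staircase: $S(x)=2\lfloor(x+1)/2\rfloor$, $S_{H,V}(x)=V\,S(x/H)$; $\mathrm{Obl}(H,V)$ is the set of functions $x\mapsto S_{H,V}(x-H\tau_0)+V\tau_0$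 with $\tau_0\in[-1,1]$. *)

theory Defs
  imports "HOL-Analysis.Analysis"
begin

text \<open>Functions are real-valued functions on the real line; as in BV theory they are
  only relevant up to Lebesgue-null sets. The jump set consists of the points near which
  u is not (a.e.) constant; for step functions these are exactly the jump points.\<close>

definition jump_set :: "(real \<Rightarrow> real) \<Rightarrow> real set" where
  "jump_set u = {x. \<not> (\<exists>\<epsilon>>0. \<exists>c. AE y in lebesgue. dist y x < \<epsilon> \<longrightarrow> u y = c)}"

definition step_on :: "real \<Rightarrow> real \<Rightarrow> (real \<Rightarrow> real) \<Rightarrow> bool" where
  "step_on a b u \<longleftrightarrow> finite (jump_set u \<inter> {a<..<b})"

definition trace_left :: "real \<Rightarrow> (real \<Rightarrow> real) \<Rightarrow> real" where
  "trace_left a u = (THE c. \<exists>\<epsilon>>0. AE y in lebesgue. y \<in> {a<..<a+\<epsilon>} \<longrightarrow> u y = c)"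

definition trace_right :: "real \<Rightarrow> (real \<Rightarrow> real) \<Rightarrow> real" where
  "trace_right b u = (THE c. \<exists>\<epsilon>>0. AE y in lebesgue. y \<in> {b-\<epsilon><..<b} \<longrightarrow> u y = c)"

definition G :: "real \<Rightarrow> real \<Rightarrow> (real \<Rightarrow> real) \<Rightarrow> real \<Rightarrow> real \<Rightarrow> (real \<Rightarrow> real) \<Rightarrow> real" where
  "G \<alpha> \<beta> f a b u = \<alpha> * real (card (jump_set u \<inter> {a<..<b}))
      + \<beta> * integral {a..b} (\<lambda>x. (u x - f x)\<^sup>2)"

definition local_min :: "real \<Rightarrow> real \<Rightarrow> (real \<Rightarrow> real) \<Rightarrow> real \<Rightarrow> real \<Rightarrow> (real \<Rightarrow> real) \<Rightarrow> bool" where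
  "local_min \<alpha> \<beta> f a b v \<longleftrightarrow> step_on a b v \<and>
     (\<forall>u. step_on a b u \<and> trace_left a u = trace_left a v \<and> trace_right b u = trace_right b v
          \<longrightarrow> G \<alpha> \<beta> f a b v \<le> G \<alpha> \<beta> f a b u)"

definition S_loc :: "(real \<Rightarrow> real) \<Rightarrow> bool" where
  "S_loc u \<longleftrightarrow> (\<forall>a b. a < b \<longrightarrow> step_on a b u)"

definition entire_local_min :: "real \<Rightarrow> real \<Rightarrow> (real \<Rightarrow> real) \<Rightarrow> (real \<Rightarrow> real) \<Rightarrow> bool" where
  "entire_local_min \<alpha> \<beta> f v \<longleftrightarrow> S_loc v \<and> (\<forall>a b. a < b \<longrightarrow> local_min \<alpha> \<beta> f a b v)"

text \<open>Canonical staircase. Note: for H = 0 (case M = 0) we get V = 0 and S_{H,V} = 0.\<close>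
definition staircase :: "real \<Rightarrow> real" where
  "staircase x = 2 * of_int \<lfloor>(x + 1) / 2\<rfloor>"

definition staircase_HV :: "real \<Rightarrow> real \<Rightarrow> real \<Rightarrow> real" where
  "staircase_HV H V x = V * staircase (x / H)"

definition Obl :: "real \<Rightarrow> real \<Rightarrow> (real \<Rightarrow> real) set" where
  "Obl H V = {(\<lambda>x. staircase_HV H V (x - H * \<tau>\<^sub>0) + V * \<tau>\<^sub>0) | \<tau>\<^sub>0. \<tau>\<^sub>0 \<in> {-1..1}}"

end

theory Submission
  imports Defs
begin


lemma AE_ex_point:
  fixes a b :: real
  assumes "a < b" "AE x in lebesgue. x \<in> {a<..<b} \<longrightarrow> P x"
  shows "\<exists>x\<in>{a<..<b}. P x"
proof (rule ccontr)
  assume "\<not> ?thesis"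
  then have "AE x in lebesgue. x \<in> {a<..<b} \<longrightarrow> x \<in> {}"
    using assms(2) by (auto elim: AE_mp)
  from mem_closed_if_AE_lebesgue_open[OF _ _ this, of "(a+b)/2"] assms(1)
  show False by auto
qed

lemma AE_negligible:
  assumes "AE x in lebesgue. P x"
  shows "negligible {x. \<not> P x}"
proof -
  from AE_E[OF assms] obtain N where N: "{x \<in> space lebesgue. \<not> P x} \<subseteq> N"
    "emeasure lebesgue N = 0" "N \<in> sets lebesgue" by blast
  then have "N \<in> null_sets lebesgue" by auto
  then have "negligible N" by (simp add: negligible_iff_null_sets)
  moreover have "{x. \<not> P x} \<subseteq> N" using N(1) by auto
  ultimately show ?thesis by (rule negligible_subset)
qed

lemma trace_left_eq:
  assumes "e > 0" "AE y in lebesgue. y \<in> {a<..<a+e} \<longrightarrow> u y = c"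
  shows "trace_left a u = c"
  unfolding trace_left_def
proof (rule the_equality)
  show "\<exists>\<epsilon>>0. AE y in lebesgue. y \<in> {a<..<a + \<epsilon>} \<longrightarrow> u y = c" using assms by blast
next
  fix c' assume "\<exists>\<epsilon>>0. AE y in lebesgue. y \<in> {a<..<a + \<epsilon>} \<longrightarrow> u y = c'"
  then obtain e' where e': "e' > 0" "AE y in lebesgue. y \<in> {a<..<a + e'} \<longrightarrow> u y = c'" by blast
  have "AE y in lebesgue. y \<in> {a<..<a + min e e'} \<longrightarrow> u y = c \<and> u y = c'"
    using e'(2) assms(2) by eventually_elim auto
  from AE_ex_point[OF _ this] e'(1) assms(1) show "c' = c" by auto
qed

lemma trace_right_eq:
  assumes "e > 0" "AE y in lebesgue. y \<in> {b-e<..<b} \<longrightarrow> u y = c"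
  shows "trace_right b u = c"
  unfolding trace_right_def
proof (rule the_equality)
  show "\<exists>\<epsilon>>0. AE y in lebesgue. y \<in> {b-\<epsilon><..<b} \<longrightarrow> u y = c" using assms by blast
next
  fix c' assume "\<exists>\<epsilon>>0. AE y in lebesgue. y \<in> {b-\<epsilon><..<b} \<longrightarrow> u y = c'"
  then obtain e' where e': "e' > 0" "AE y in lebesgue. y \<in> {b-e'<..<b} \<longrightarrow> u y = c'" by blast
  have "AE y in lebesgue. y \<in> {b - min e e'<..<b} \<longrightarrow> u y = c \<and> u y = c'"
    using e'(2) assms(2) by eventually_elim auto
  from AE_ex_point[OF _ this] e'(1) assms(1) show "c' = c" by auto
qed

lemma trace_left_cong:
  assumes "e > 0" "AE y in lebesgue. y \<in> {a<..<a+e} \<longrightarrow> u y = w y"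
  shows "trace_left a u = trace_left a w"
proof -
  have "(\<exists>\<epsilon>>0. AE y in lebesgue. y \<in> {a<..<a + \<epsilon>} \<longrightarrow> u y = c) \<longleftrightarrow>
        (\<exists>\<epsilon>>0. AE y in lebesgue. y \<in> {a<..<a + \<epsilon>} \<longrightarrow> w y = c)" for c
  proof
    assume "\<exists>\<epsilon>>0. AE y in lebesgue. y \<in> {a<..<a + \<epsilon>} \<longrightarrow> u y = c"
    then obtain e' where "e'>0" "AE y in lebesgue. y \<in> {a<..<a + e'} \<longrightarrow> u y = c" by blast
    then have "AE y in lebesgue. y \<in> {a<..<a + min e e'} \<longrightarrow> w y = c"
      using assms(2) by eventually_elim auto
    then show "\<exists>\<epsilon>>0. AE y in lebesgue. y \<in> {a<..<a + \<epsilon>} \<longrightarrow> w y = c"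
      using \<open>e'>0\<close> assms(1) by (intro exI[of _ "min e e'"]) auto
  next
    assume "\<exists>\<epsilon>>0. AE y in lebesgue. y \<in> {a<..<a + \<epsilon>} \<longrightarrow> w y = c"
    then obtain e' where "e'>0" "AE y in lebesgue. y \<in> {a<..<a + e'} \<longrightarrow> w y = c" by blast
    then have "AE y in lebesgue. y \<in> {a<..<a + min e e'} \<longrightarrow> u y = c"
      using assms(2) by eventually_elim auto
    then show "\<exists>\<epsilon>>0. AE y in lebesgue. y \<in> {a<..<a + \<epsilon>} \<longrightarrow> u y = c"
      using \<open>e'>0\<close> assms(1) by (intro exI[of _ "min e e'"]) auto
  qed
  then show ?thesis unfolding trace_left_def by simp
qed

lemma trace_right_cong:
  assumes "e > 0" "AE y in lebesgue. y \<in> {b-e<..<b} \<longrightarrow> u y = w y"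
  shows "trace_right b u = trace_right b w"
proof -
  have "(\<exists>\<epsilon>>0. AE y in lebesgue. y \<in> {b-\<epsilon><..<b} \<longrightarrow> u y = c) \<longleftrightarrow>
        (\<exists>\<epsilon>>0. AE y in lebesgue. y \<in> {b-\<epsilon><..<b} \<longrightarrow> w y = c)" for c
  proof
    assume "\<exists>\<epsilon>>0. AE y in lebesgue. y \<in> {b-\<epsilon><..<b} \<longrightarrow> u y = c"
    then obtain e' where "e'>0" "AE y in lebesgue. y \<in> {b-e'<..<b} \<longrightarrow> u y = c" by blast
    then have "AE y in lebesgue. y \<in> {b - min e e'<..<b} \<longrightarrow> w y = c"
      using assms(2) by eventually_elim auto
    then show "\<exists>\<epsilon>>0. AE y in lebesgue. y \<in> {b-\<epsilon><..<b} \<longrightarrow> w y = c"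
      using \<open>e'>0\<close> assms(1) by (intro exI[of _ "min e e'"]) auto
  next
    assume "\<exists>\<epsilon>>0. AE y in lebesgue. y \<in> {b-\<epsilon><..<b} \<longrightarrow> w y = c"
    then obtain e' where "e'>0" "AE y in lebesgue. y \<in> {b-e'<..<b} \<longrightarrow> w y = c" by blast
    then have "AE y in lebesgue. y \<in> {b - min e e'<..<b} \<longrightarrow> u y = c"
      using assms(2) by eventually_elim auto
    then show "\<exists>\<epsilon>>0. AE y in lebesgue. y \<in> {b-\<epsilon><..<b} \<longrightarrow> u y = c"
      using \<open>e'>0\<close> assms(1) by (intro exI[of _ "min e e'"]) auto
  qed
  then show ?thesis unfolding trace_right_def by simp
qed

lemma not_jump:
  assumes "e > 0" "AE y in lebesgue. dist y x < e \<longrightarrow> u y = c"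
  shows "x \<notin> jump_set u"
  using assms unfolding jump_set_def by blast

lemma jump_set_cong:
  assumes "e > 0" "AE y in lebesgue. dist y x < e \<longrightarrow> u y = w y"
  shows "x \<in> jump_set u \<longleftrightarrow> x \<in> jump_set w"
proof -
  have "(\<exists>\<epsilon>>0. \<exists>c. AE y in lebesgue. dist y x < \<epsilon> \<longrightarrow> u y = c) \<longleftrightarrow>
        (\<exists>\<epsilon>>0. \<exists>c. AE y in lebesgue. dist y x < \<epsilon> \<longrightarrow> w y = c)"
  proof
    assume "\<exists>\<epsilon>>0. \<exists>c. AE y in lebesgue. dist y x < \<epsilon> \<longrightarrow> u y = c"
    then obtain e' c where "e'>0" "AE y in lebesgue. dist y x < e' \<longrightarrow> u y = c" by blast
    then have "AE y in lebesgue. dist y x < min e e' \<longrightarrow> w y = c"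
      using assms(2) by eventually_elim auto
    then show "\<exists>\<epsilon>>0. \<exists>c. AE y in lebesgue. dist y x < \<epsilon> \<longrightarrow> w y = c"
      using \<open>e'>0\<close> assms(1) by (intro exI[of _ "min e e'"]) auto
  next
    assume "\<exists>\<epsilon>>0. \<exists>c. AE y in lebesgue. dist y x < \<epsilon> \<longrightarrow> w y = c"
    then obtain e' c where "e'>0" "AE y in lebesgue. dist y x < e' \<longrightarrow> w y = c" by blast
    then have "AE y in lebesgue. dist y x < min e e' \<longrightarrow> u y = c"
      using assms(2) by eventually_elim auto
    then show "\<exists>\<epsilon>>0. \<exists>c. AE y in lebesgue. dist y x < \<epsilon> \<longrightarrow> u y = c"
      using \<open>e'>0\<close> assms(1) by (intro exI[of _ "min e e'"]) auto
  qed
  then show ?thesis unfolding jump_set_def mem_Collect_eq by blast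
qed

lemma jump_I:
  assumes "e > 0" "AE y in lebesgue. y \<in> {x-e<..<x} \<longrightarrow> u y = c1"
    "AE y in lebesgue. y \<in> {x<..<x+e} \<longrightarrow> u y = c2" "c1 \<noteq> c2"
  shows "x \<in> jump_set u"
proof (rule ccontr)
  assume "x \<notin> jump_set u"
  then obtain e' c where e': "e' > 0" "AE y in lebesgue. dist y x < e' \<longrightarrow> u y = c"
    unfolding jump_set_def by blast
  have "AE y in lebesgue. y \<in> {x - min e e'<..<x} \<longrightarrow> u y = c1 \<and> u y = c"
    using assms(2) e'(2) by eventually_elim (auto simp: dist_real_def)
  from AE_ex_point[OF _ this] e'(1) assms(1) have "c1 = c" by auto
  have "AE y in lebesgue. y \<in> {x<..<x + min e e'} \<longrightarrow> u y = c2 \<and> u y = c"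
    using assms(3) e'(2) by eventually_elim (auto simp: dist_real_def)
  from AE_ex_point[OF _ this] e'(1) assms(1) have "c2 = c" by auto
  with \<open>c1 = c\<close> assms(4) show False by simp
qed

lemma no_jump_const:
  fixes S :: "real set"
  assumes "open S" "connected S" "\<And>x. x \<in> S \<Longrightarrow> x \<notin> jump_set u"
  shows "\<exists>c. AE y in lebesgue. y \<in> S \<longrightarrow> u y = c"
proof (cases "S = {}")
  case True then show ?thesis by auto
next
  case False
  then obtain x0 where x0: "x0 \<in> S" by blast
  define cf where "cf x = (SOME c. \<exists>e>0. AE y in lebesgue. dist y x < e \<longrightarrow> u y = c)" for x
  have cf: "\<exists>e>0. AE y in lebesgue. dist y x < e \<longrightarrow> u y = cf x" if "x \<in> S" for x
  proof -
    from assms(3)[OF that] have "\<exists>c e. e > 0 \<and> (AE y in lebesgue. dist y x < e \<longrightarrow> u y = c)"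
      unfolding jump_set_def by blast
    then have "\<exists>c. \<exists>e>0. AE y in lebesgue. dist y x < e \<longrightarrow> u y = c" by blast
    then show ?thesis unfolding cf_def by (rule someI_ex)
  qed
  have loc: "cf y = cf x" if "x \<in> S" "y \<in> S" "dist y x < e" "e > 0"
     "AE z in lebesgue. dist z x < e \<longrightarrow> u z = cf x" for x y e
  proof -
    from cf[OF that(2)] obtain e' where e': "e' > 0" "AE z in lebesgue. dist z y < e' \<longrightarrow> u z = cf y"
      by blast
    define r where "r = min e' (e - dist y x)"
    have r: "r > 0" using e' that by (auto simp: r_def)
    have "AE z in lebesgue. z \<in> {y - r<..<y+r} \<longrightarrow> u z = cf y \<and> u z = cf x"
      using e'(2) that(5)
    proof eventually_elim
      case (elim z)
      show ?case
      proof
        assume z: "z \<in> {y - r<..<y+r}"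
        then have "\<bar>z - y\<bar> < r" by (auto simp: abs_less_iff)
        moreover have "r \<le> e'" "r \<le> e - dist y x" by (auto simp: r_def)
        moreover have "\<bar>z - x\<bar> \<le> \<bar>z - y\<bar> + \<bar>y - x\<bar>" by arith
        ultimately have "dist z y < e'" "dist z x < e" by (auto simp: dist_real_def)
        then show "u z = cf y \<and> u z = cf x" using elim by auto
      qed
    qed
    from AE_ex_point[OF _ this] r show ?thesis by auto
  qed
  have const: "cf x = cf x0" if "x \<in> S" for x
  proof (rule connected_local_const[OF assms(2) that x0])
    show "\<forall>a\<in>S. \<forall>\<^sub>F b in at a within S. cf a = cf b"
    proof
      fix a assume a: "a \<in> S"
      from cf[OF a] obtain e where e: "e>0" "AE z in lebesgue. dist z a < e \<longrightarrow> u z = cf a" by blast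
      show "\<forall>\<^sub>F b in at a within S. cf a = cf b"
        unfolding eventually_at using e a loc by (metis)
    qed
  qed
  define c where "c = cf x0"
  define R where "R = {(q, r). q \<in> \<rat> \<and> r \<in> \<rat> \<and> r > 0 \<and>
                      (AE z in lebesgue. dist z q < r \<longrightarrow> u z = c)}"
  have cR: "countable R"
    by (rule countable_subset[of _ "\<rat> \<times> \<rat>"]) (auto simp: R_def countable_rat)
  have AEall: "AE z in lebesgue. \<forall>p\<in>R. dist z (fst p) < snd p \<longrightarrow> u z = c"
    using cR by (subst AE_ball_countable) (auto simp: R_def)
  have cover: "\<exists>p\<in>R. dist y (fst p) < snd p" if "y \<in> S" for y
  proof -
    from cf[OF that] obtain e where e: "e>0" "AE z in lebesgue. dist z y < e \<longrightarrow> u z = cf y" by blast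
    have cy: "cf y = c" using const[OF that] c_def by simp
    obtain q where q: "q \<in> \<rat>" "y - e/3 < q" "q < y + e/3"
      using Rats_dense_in_real[of "y - e/3" "y + e/3"] e(1) by auto
    obtain r where r: "r \<in> \<rat>" "e/3 < r" "r < 2*e/3"
      using Rats_dense_in_real[of "e/3" "2*e/3"] e(1) by auto
    have "AE z in lebesgue. dist z q < r \<longrightarrow> u z = c"
      using e(2)
    proof eventually_elim
      case (elim z)
      show ?case
      proof
        assume "dist z q < r"
        then have "dist z y < e" using q r by (auto simp: dist_real_def)
        then show "u z = c" using elim cy by auto
      qed
    qed
    then have "(q, r) \<in> R" using q r e by (auto simp: R_def)
    moreover have "dist y q < r" using q r by (auto simp: dist_real_def)
    ultimately show ?thesis by force
  qed
  have "AE z in lebesgue. z \<in> S \<longrightarrow> u z = c"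
    using AEall by eventually_elim (metis cover)
  then show ?thesis by blast
qed


definition Ipoly :: "real \<Rightarrow> real \<Rightarrow> real \<Rightarrow> real \<Rightarrow> real" where
  "Ipoly M c s t = c\<^sup>2 * (t - s) - c * M * (t\<^sup>2 - s\<^sup>2) + M\<^sup>2 * (t^3 - s^3) / 3"

lemma sq_has_integral:
  fixes s t :: real
  assumes "s \<le> t"
  shows "((\<lambda>y. (c - M*y)\<^sup>2) has_integral Ipoly M c s t) {s..t}"
proof -
  have "((\<lambda>y. c\<^sup>2*y - c*M*y\<^sup>2 + M\<^sup>2*y^3/3) has_vector_derivative (c - M*y)\<^sup>2) (at y within {s..t})"
    for y
    unfolding has_real_derivative_iff_has_vector_derivative[symmetric]
    by (auto intro!: derivative_eq_intros simp: power2_eq_square algebra_simps)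
  from fundamental_theorem_of_calculus[OF assms this]
  have "((\<lambda>y. (c - M*y)\<^sup>2) has_integral
     ((c\<^sup>2*t - c*M*t\<^sup>2 + M\<^sup>2*t^3/3) - (c\<^sup>2 * s - c*M * s\<^sup>2 + M\<^sup>2 * s^3/3))) {s..t}" by simp
  moreover have "(c\<^sup>2*t - c*M*t\<^sup>2 + M\<^sup>2*t^3/3) - (c\<^sup>2 * s - c*M * s\<^sup>2 + M\<^sup>2 * s^3/3) = Ipoly M c s t"
    by (simp add: Ipoly_def field_simps)
  ultimately show ?thesis by simp
qed

lemma piece_has_integral:
  fixes a b :: real
  assumes "a \<le> b" "AE y in lebesgue. y \<in> {a<..<b} \<longrightarrow> u y = c"
  shows "((\<lambda>x. (u x - M*x)\<^sup>2) has_integral Ipoly M c a b) {a..b}"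
proof -
  have neg: "negligible ({x. \<not> (x \<in> {a<..<b} \<longrightarrow> u x = c)} \<union> {a, b})"
    using AE_negligible[OF assms(2)] by (simp add: negligible_insert)
  show ?thesis
    by (rule has_integral_spike[OF neg _ sq_has_integral[OF assms(1), of c M]]) auto
qed

lemma step_induct[consumes 2, case_names base split]:
  fixes a b :: real
  assumes "a < b" "finite (jump_set u \<inter> {a<..<b})"
    and base: "\<And>a b c. a < b \<Longrightarrow> jump_set u \<inter> {a<..<b} = {} \<Longrightarrow>
        (AE y in lebesgue. y \<in> {a<..<b} \<longrightarrow> u y = c) \<Longrightarrow> Q a b"
    and split: "\<And>a m b. a < m \<Longrightarrow> m < b \<Longrightarrow> m \<in> jump_set u \<Longrightarrow>
        finite (jump_set u \<inter> {a<..<b}) \<Longrightarrow> Q a m \<Longrightarrow> Q m b \<Longrightarrow> Q a b"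
  shows "Q a b"
proof -
  have "\<And>a b. a < b \<Longrightarrow> finite (jump_set u \<inter> {a<..<b}) \<Longrightarrow>
          card (jump_set u \<inter> {a<..<b}) = n \<Longrightarrow> Q a b" for n
  proof (induction n rule: less_induct)
    case (less n a b)
    show ?case
    proof (cases "jump_set u \<inter> {a<..<b} = {}")
      case True
      have "\<exists>c. AE y in lebesgue. y \<in> {a<..<b} \<longrightarrow> u y = c"
        by (rule no_jump_const) (use True in auto)
      then obtain c where "AE y in lebesgue. y \<in> {a<..<b} \<longrightarrow> u y = c" by blast
      from base[OF less(2) True this] show ?thesis .
    next
      case False
      then obtain m where m: "m \<in> jump_set u" "a < m" "m < b" by auto
      have s1: "jump_set u \<inter> {a<..<m} \<subset> jump_set u \<inter> {a<..<b}" using m by auto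
      have s2: "jump_set u \<inter> {m<..<b} \<subset> jump_set u \<inter> {a<..<b}" using m by auto
      have f1: "finite (jump_set u \<inter> {a<..<m})" by (rule finite_subset[OF _ less(3)]) (use s1 in auto)
      have f2: "finite (jump_set u \<inter> {m<..<b})" by (rule finite_subset[OF _ less(3)]) (use s2 in auto)
      have "Q a m" using less(1)[OF _ m(2) f1 refl] psubset_card_mono[OF less(3) s1] less(4) by simp
      moreover have "Q m b" using less(1)[OF _ m(3) f2 refl] psubset_card_mono[OF less(3) s2] less(4) by simp
      ultimately show ?thesis using split[OF m(2) m(3) m(1) less(3)] by blast
    qed
  qed
  then show ?thesis using assms(1,2) by blast
qed

lemma step_integrable:
  fixes a b :: real
  assumes "a < b" "finite (jump_set u \<inter> {a<..<b})"
  shows "(\<lambda>x. (u x - M*x)\<^sup>2) integrable_on {a..b}"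
  using assms
proof (induction rule: step_induct)
  case (base a b c)
  then show ?case using piece_has_integral[of a b u c M] by (auto simp: has_integral_integrable)
next
  case (split a m b)
  then show ?case using Henstock_Kurzweil_Integration.integrable_combine[of a m b] by auto
qed

lemma card_split_jump:
  fixes a m b :: real
  assumes "a < m" "m < b" "finite (J \<inter> {a<..<b})" "m \<in> J"
  shows "card (J \<inter> {a<..<b}) = card (J \<inter> {a<..<m}) + card (J \<inter> {m<..<b}) + 1"
proof -
  have eq: "J \<inter> {a<..<b} = insert m ((J \<inter> {a<..<m}) \<union> (J \<inter> {m<..<b}))" using assms by auto
  have f1: "finite (J \<inter> {a<..<m})" by (rule finite_subset[OF _ assms(3)]) (use assms in auto)
  have f2: "finite (J \<inter> {m<..<b})" by (rule finite_subset[OF _ assms(3)]) (use assms in auto)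
  have d: "(J \<inter> {a<..<m}) \<inter> (J \<inter> {m<..<b}) = {}" by auto
  have "card ((J \<inter> {a<..<m}) \<union> (J \<inter> {m<..<b})) = card (J \<inter> {a<..<m}) + card (J \<inter> {m<..<b})"
    using f1 f2 d by (simp add: card_Un_disjoint)
  moreover have "m \<notin> (J \<inter> {a<..<m}) \<union> (J \<inter> {m<..<b})" by auto
  ultimately show ?thesis unfolding eq using f1 f2 by simp
qed

lemma card_split_nojump:
  fixes a m b :: real
  assumes "a < m" "m < b" "finite (J \<inter> {a<..<b})" "m \<notin> J"
  shows "card (J \<inter> {a<..<b}) = card (J \<inter> {a<..<m}) + card (J \<inter> {m<..<b})"
proof -
  have eq: "J \<inter> {a<..<b} = ((J \<inter> {a<..<m}) \<union> (J \<inter> {m<..<b}))"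
    using assms by (auto simp: less_le)
  have f1: "finite (J \<inter> {a<..<m})" by (rule finite_subset[OF _ assms(3)]) (use assms in auto)
  have f2: "finite (J \<inter> {m<..<b})" by (rule finite_subset[OF _ assms(3)]) (use assms in auto)
  have "(J \<inter> {a<..<m}) \<inter> (J \<inter> {m<..<b}) = {}" by auto
  then show ?thesis unfolding eq using f1 f2 by (simp add: card_Un_disjoint)
qed

lemma int_split:
  fixes a m b :: real and f :: "real \<Rightarrow> real"
  assumes "a \<le> m" "m \<le> b" "f integrable_on {a..b}"
  shows "integral {a..b} f = integral {a..m} f + integral {m..b} f"
  using Henstock_Kurzweil_Integration.integral_combine[OF assms] by simp

lemma AE_jump_set_eq:
  assumes "AE x in lebesgue. u x = w x"
  shows "jump_set u = jump_set w"
proof -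
  have "AE y in lebesgue. dist y x < 1 \<longrightarrow> u y = w y" for x using assms by (auto elim: AE_mp)
  then show ?thesis using jump_set_cong[of 1 x u w for x] by auto
qed

lemma AE_trace_eq:
  assumes "AE x in lebesgue. u x = w x"
  shows "trace_left a u = trace_left a w" "trace_right a u = trace_right a w"
proof -
  have h: "AE y in lebesgue. P y \<longrightarrow> u y = w y" for P using assms by (auto elim: AE_mp)
  show "trace_left a u = trace_left a w" by (rule trace_left_cong[of 1, OF _ h]) auto
  show "trace_right a u = trace_right a w" by (rule trace_right_cong[of 1, OF _ h]) auto
qed

lemma AE_integral_eq:
  assumes "AE x in lebesgue. u x = w x"
  shows "integral S (\<lambda>x. (u x - f x)\<^sup>2) = integral S (\<lambda>x. (w x - f x)\<^sup>2)"
  using AE_negligible[OF assms] by (intro integral_spike[of "{x. u x \<noteq> w x}"]) auto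

lemma AE_G_eq:
  assumes "AE x in lebesgue. u x = w x"
  shows "G \<alpha> \<beta> f a b u = G \<alpha> \<beta> f a b w"
  unfolding G_def using AE_jump_set_eq[OF assms] AE_integral_eq[OF assms] by simp

lemma AE_local_min_eq:
  assumes "AE x in lebesgue. u x = w x"
  shows "local_min \<alpha> \<beta> f a b u \<longleftrightarrow> local_min \<alpha> \<beta> f a b w"
  unfolding local_min_def step_on_def
  using AE_jump_set_eq[OF assms] AE_trace_eq[OF assms] AE_G_eq[OF assms] by simp

lemma AE_elm_eq:
  assumes "AE x in lebesgue. u x = w x"
  shows "entire_local_min \<alpha> \<beta> f u \<longleftrightarrow> entire_local_min \<alpha> \<beta> f w"
  unfolding entire_local_min_def S_loc_def step_on_def
  using AE_jump_set_eq[OF assms] AE_local_min_eq[OF assms] by simp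

lemma G_nonneg:
  assumes "\<alpha> \<ge> 0" "\<beta> \<ge> 0"
  shows "G \<alpha> \<beta> f a b u \<ge> 0"
proof -
  have "integral {a..b} (\<lambda>x. (u x - f x)\<^sup>2) \<ge> 0"
    by (cases "(\<lambda>x. (u x - f x)\<^sup>2) integrable_on {a..b}")
       (auto intro: integral_nonneg simp: not_integrable_integral)
  then show ?thesis unfolding G_def using assms by auto
qed


definition pc :: "real \<Rightarrow> real \<Rightarrow> real" where
  "pc H t = (let s = max (-H) (min H t) in s^3/3 - H^2 * s)"

definition kf :: "real \<Rightarrow> real \<Rightarrow> real" where
  "kf H d = d^3/3 - H^2 * d - pc H d"

definition Psi :: "real \<Rightarrow> real \<Rightarrow> real \<Rightarrow> real \<Rightarrow> real \<Rightarrow> real" where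
  "Psi \<beta> M H x c = \<beta> * M^2 * H^2 * x + \<beta> * M^2 * pc H (x - c / M)"

lemma pc_bounds:
  assumes "H \<ge> 0"
  shows "pc H t \<ge> - 2 * H^3 / 3" "pc H t \<le> 2 * H^3 / 3"
proof -
  define s where "s = max (-H) (min H t)"
  have s: "-H \<le> s" "s \<le> H" using assms by (auto simp: s_def)
  have e: "pc H t = s^3/3 - H^2 * s" by (simp add: pc_def s_def Let_def)
  have "s^3/3 - H^2 * s + 2 * H^3 / 3 = (s - H)^2 * (s + 2*H) / 3"
    by (simp add: power2_eq_square power3_eq_cube algebra_simps)
  moreover have "(s - H)^2 * (s + 2*H) \<ge> 0" using s assms by (intro mult_nonneg_nonneg) auto
  ultimately show "pc H t \<ge> - 2 * H^3 / 3" unfolding e by linarith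
  have "2 * H^3 / 3 - (s^3/3 - H^2 * s) = (s + H)^2 * (2*H - s) / 3"
    by (simp add: power2_eq_square power3_eq_cube algebra_simps)
  moreover have "(s + H)^2 * (2*H - s) \<ge> 0" using s assms by (intro mult_nonneg_nonneg) auto
  ultimately show "pc H t \<le> 2 * H^3 / 3" unfolding e by linarith
qed

lemma pc_H: "H \<ge> 0 \<Longrightarrow> pc H H = - 2 * H^3 / 3"
  by (simp add: pc_def Let_def power3_eq_cube power2_eq_square)

lemma pc_mH: "H \<ge> 0 \<Longrightarrow> pc H (-H) = 2 * H^3 / 3"
  by (simp add: pc_def Let_def power3_eq_cube power2_eq_square)

lemma kf_zero: "-H \<le> d \<Longrightarrow> d \<le> H \<Longrightarrow> kf H d = 0"
  by (simp add: kf_def pc_def Let_def)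

lemma kf_mono:
  assumes "H \<ge> 0" "d1 \<le> d2"
  shows "kf H d1 \<le> kf H d2"
proof -
  have hi: "kf H d = (d - H)^2 * (d + 2*H) / 3" if "d \<ge> H" for d
    using that assms by (simp add: kf_def pc_def Let_def power2_eq_square power3_eq_cube algebra_simps)
  have lo: "kf H d = (d + H)^2 * (d - 2*H) / 3" if "d \<le> -H" for d
    using that assms by (simp add: kf_def pc_def Let_def power2_eq_square power3_eq_cube algebra_simps)
  have hi0: "kf H d \<ge> 0" if "d \<ge> -H" for d
  proof (cases "d \<ge> H")
    case True
    have "(d - H)^2 * (d + 2*H) \<ge> 0" using True assms by (intro mult_nonneg_nonneg) auto
    then show ?thesis using hi[OF True] by auto
  next
    case False then show ?thesis using kf_zero[of H d] that by auto
  qed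
  have lo0: "kf H d \<le> 0" if "d \<le> H" for d
  proof (cases "d \<le> -H")
    case True
    have "(d + H)^2 * (d - 2*H) \<le> 0" using True assms by (intro mult_nonneg_nonpos) auto
    then show ?thesis using lo[OF True] by auto
  next
    case False then show ?thesis using kf_zero[of H d] that by auto
  qed
  show ?thesis
  proof (cases "d1 \<ge> H")
    case True
    then have "d2 \<ge> H" using assms by auto
    have h1: "3 * kf H d1 = d1^3 - 3*H^2*d1 + 2*H^3" using True assms
      by (simp add: kf_def pc_def Let_def algebra_simps power2_eq_square power3_eq_cube)
    have h2: "3 * kf H d2 = d2^3 - 3*H^2*d2 + 2*H^3" using \<open>d2 \<ge> H\<close> assms
      by (simp add: kf_def pc_def Let_def algebra_simps power2_eq_square power3_eq_cube)
    have eq: "(d2 - d1) * (d2^2 + d1*d2 + d1^2 - 3*H^2) = (d2^3 - 3*H^2*d2 + 2*H^3) - (d1^3 - 3*H^2*d1 + 2*H^3)"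
      by (simp add: algebra_simps power2_eq_square power3_eq_cube)
    have "kf H d2 - kf H d1 = (d2 - d1) * ((d2^2 + d1 * d2 + d1^2) / 3 - H^2)"
      using h1 h2 eq by (simp add: field_simps)
    moreover have "d2^2 \<ge> H^2" "d1^2 \<ge> H^2" "d1 * d2 \<ge> H^2"
      using True \<open>d2 \<ge> H\<close> assms
      by (auto intro!: power_mono mult_mono simp: power2_eq_square)
    moreover have "(d2 - d1) * ((d2^2 + d1 * d2 + d1^2) / 3 - H^2) \<ge> 0"
      using calculation assms by (intro mult_nonneg_nonneg) auto
    ultimately show ?thesis by linarith
  next
    case False
    show ?thesis
    proof (cases "d2 \<le> -H")
      case True
      then have "d1 \<le> -H" using assms by auto
      have h1: "3 * kf H d1 = d1^3 - 3*H^2*d1 - 2*H^3" using \<open>d1 \<le> -H\<close> assms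
        by (simp add: kf_def pc_def Let_def algebra_simps power2_eq_square power3_eq_cube)
      have h2: "3 * kf H d2 = d2^3 - 3*H^2*d2 - 2*H^3" using True assms
        by (simp add: kf_def pc_def Let_def algebra_simps power2_eq_square power3_eq_cube)
      have eq: "(d2 - d1) * (d2^2 + d1*d2 + d1^2 - 3*H^2) = (d2^3 - 3*H^2*d2 - 2*H^3) - (d1^3 - 3*H^2*d1 - 2*H^3)"
        by (simp add: algebra_simps power2_eq_square power3_eq_cube)
      have "kf H d2 - kf H d1 = (d2 - d1) * ((d2^2 + d1 * d2 + d1^2) / 3 - H^2)"
        using h1 h2 eq by (simp add: field_simps)
      moreover have "d2^2 \<ge> H^2" "d1^2 \<ge> H^2" "d1 * d2 \<ge> H^2"
      proof -
        have n: "-d2 \<ge> H" "-d1 \<ge> H" using True \<open>d1 \<le> -H\<close> by auto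
        have "H*H \<le> (-d2)*(-d2)" using mult_mono[of H "-d2" H "-d2"] n assms by linarith
        moreover have "H*H \<le> (-d1)*(-d1)" using mult_mono[of H "-d1" H "-d1"] n assms by linarith
        moreover have "H*H \<le> (-d1)*(-d2)" using mult_mono[of H "-d1" H "-d2"] n assms by linarith
        ultimately have "H*H \<le> (-d2)*(-d2)" "H*H \<le> (-d1)*(-d1)" "H*H \<le> (-d1)*(-d2)" by auto
        then show "d2^2 \<ge> H^2" "d1^2 \<ge> H^2" "d1 * d2 \<ge> H^2" by (auto simp: power2_eq_square)
      qed
      moreover have "(d2 - d1) * ((d2^2 + d1 * d2 + d1^2) / 3 - H^2) \<ge> 0"
      using calculation assms by (intro mult_nonneg_nonneg) auto
    ultimately show ?thesis by linarith
    next
      case False2: False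
      then have "d2 > -H" by auto
      then show ?thesis using lo0[of d1] hi0[of d2] False by auto
    qed
  qed
qed

lemma Ipoly_shift:
  assumes "M \<noteq> 0"
  shows "Ipoly M c s t = M^2 * ((t - c/M)^3 - (s - c/M)^3) / 3"
  using assms by (simp add: Ipoly_def power2_eq_square power3_eq_cube field_simps)

lemma piece_ineq:
  assumes "M \<noteq> 0" "H \<ge> 0" "\<beta> \<ge> 0" "s \<le> t"
  shows "\<beta> * Ipoly M c s t \<ge> Psi \<beta> M H t c - Psi \<beta> M H s c"
proof -
  have "\<beta> * Ipoly M c s t - (Psi \<beta> M H t c - Psi \<beta> M H s c) =
        \<beta> * M^2 * (kf H (t - c/M) - kf H (s - c/M))"
  proof -
    define T where "T = t - c/M"
    define S where "S = s - c/M"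
    have TS: "t = T + c/M" "s = S + c/M" by (auto simp: T_def S_def)
    show ?thesis unfolding Ipoly_shift[OF assms(1)] Psi_def kf_def T_def[symmetric] S_def[symmetric]
      unfolding TS by (simp add: field_simps)
  qed
  moreover have "kf H (t - c/M) - kf H (s - c/M) \<ge> 0" using kf_mono[OF assms(2), of "s - c/M" "t - c/M"] assms by auto
  moreover have "\<beta> * M^2 * (kf H (t - c/M) - kf H (s - c/M)) \<ge> 0"
    using calculation(2) assms by (intro mult_nonneg_nonneg) auto
  ultimately show ?thesis by linarith
qed

lemma piece_eq:
  assumes "M \<noteq> 0" "H \<ge> 0" "s - c/M \<ge> -H" "t - c/M \<le> H" "s \<le> t"
  shows "\<beta> * Ipoly M c s t = Psi \<beta> M H t c - Psi \<beta> M H s c"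
proof -
  have "\<beta> * Ipoly M c s t - (Psi \<beta> M H t c - Psi \<beta> M H s c) =
        \<beta> * M^2 * (kf H (t - c/M) - kf H (s - c/M))"
  proof -
    define T where "T = t - c/M"
    define S where "S = s - c/M"
    have TS: "t = T + c/M" "s = S + c/M" by (auto simp: T_def S_def)
    show ?thesis unfolding Ipoly_shift[OF assms(1)] Psi_def kf_def T_def[symmetric] S_def[symmetric]
      unfolding TS by (simp add: field_simps)
  qed
  moreover have "kf H (t - c/M) = 0" "kf H (s - c/M) = 0" using assms by (auto intro!: kf_zero)
  ultimately show ?thesis by simp
qed

lemma jump_ineq:
  assumes "H \<ge> 0" "\<alpha> = 4/3 * \<beta> * M^2 * H^3" "\<beta> \<ge> 0"
  shows "Psi \<beta> M H x c1 - Psi \<beta> M H x c2 \<le> \<alpha>"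
proof -
  have "Psi \<beta> M H x c1 - Psi \<beta> M H x c2 = \<beta> * M^2 * (pc H (x - c1/M) - pc H (x - c2/M))"
    by (simp add: Psi_def algebra_simps)
  moreover have "pc H (x - c1/M) - pc H (x - c2/M) \<le> 4/3 * H^3"
    using pc_bounds[OF assms(1), of "x - c1/M"] pc_bounds[OF assms(1), of "x - c2/M"] by auto
  moreover have "\<beta> * M^2 \<ge> 0" using assms by auto
  ultimately have "Psi \<beta> M H x c1 - Psi \<beta> M H x c2 \<le> \<beta> * M^2 * (4/3 * H^3)"
    by (metis mult_left_mono)
  then show ?thesis using assms(2) by (simp add: algebra_simps)
qed

lemma jump_eq:
  assumes "H \<ge> 0" "\<alpha> = 4/3 * \<beta> * M^2 * H^3" "M \<noteq> 0"
  shows "Psi \<beta> M H x (M * (x + H)) - Psi \<beta> M H x (M * (x - H)) = \<alpha>"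
proof -
  have e1: "x - M * (x + H) / M = -H" "x - M * (x - H) / M = H" using assms(3) by auto
  have "Psi \<beta> M H x (M * (x + H)) - Psi \<beta> M H x (M * (x - H)) = \<beta> * M^2 * (pc H (-H) - pc H H)"
    unfolding Psi_def e1 by (simp add: algebra_simps)
  then show ?thesis using pc_H[OF assms(1)] pc_mH[OF assms(1)] assms(2) by (simp add: algebra_simps)
qed

lemma G_split_jump:
  fixes a m b :: real
  assumes "a < m" "m < b" "finite (jump_set u \<inter> {a<..<b})" "m \<in> jump_set u"
  shows "G \<alpha> \<beta> (\<lambda>x. M * x) a b u = G \<alpha> \<beta> (\<lambda>x. M * x) a m u + G \<alpha> \<beta> (\<lambda>x. M * x) m b u + \<alpha>"
proof -
  have i: "(\<lambda>x. (u x - M*x)\<^sup>2) integrable_on {a..b}" using step_integrable[of a b u M] assms by simp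
  have "integral {a..b} (\<lambda>x. (u x - M*x)\<^sup>2) = integral {a..m} (\<lambda>x. (u x - M*x)\<^sup>2) + integral {m..b} (\<lambda>x. (u x - M*x)\<^sup>2)"
    by (rule int_split[OF _ _ i]) (use assms in auto)
  then show ?thesis unfolding G_def card_split_jump[OF assms]
    by (simp add: algebra_simps)
qed

lemma G_split_nojump:
  fixes a m b :: real
  assumes "a < m" "m < b" "finite (jump_set u \<inter> {a<..<b})" "m \<notin> jump_set u"
  shows "G \<alpha> \<beta> (\<lambda>x. M * x) a b u = G \<alpha> \<beta> (\<lambda>x. M * x) a m u + G \<alpha> \<beta> (\<lambda>x. M * x) m b u"
proof -
  have i: "(\<lambda>x. (u x - M*x)\<^sup>2) integrable_on {a..b}" using step_integrable[of a b u M] assms by simp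
  have "integral {a..b} (\<lambda>x. (u x - M*x)\<^sup>2) = integral {a..m} (\<lambda>x. (u x - M*x)\<^sup>2) + integral {m..b} (\<lambda>x. (u x - M*x)\<^sup>2)"
    by (rule int_split[OF _ _ i]) (use assms in auto)
  then show ?thesis unfolding G_def card_split_nojump[OF assms]
    by (simp add: algebra_simps)
qed

lemma G_piece:
  fixes a b :: real
  assumes "a < b" "jump_set u \<inter> {a<..<b} = {}" "AE y in lebesgue. y \<in> {a<..<b} \<longrightarrow> u y = c"
  shows "G \<alpha> \<beta> (\<lambda>x. M * x) a b u = \<beta> * Ipoly M c a b"
  unfolding G_def using assms integral_unique[OF piece_has_integral[OF _ assms(3), of M]] by simp

lemma piece_traces:
  fixes a b :: real
  assumes "a < b" "AE y in lebesgue. y \<in> {a<..<b} \<longrightarrow> u y = c"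
  shows "trace_left a u = c" "trace_right b u = c"
  using assms by (auto intro!: trace_left_eq[of "b - a"] trace_right_eq[of "b - a"])

locale calib =
  fixes \<alpha> \<beta> M H :: real
  assumes M: "M \<noteq> 0" and H: "H > 0" and \<beta>: "\<beta> > 0" and \<alpha>: "\<alpha> = 4/3 * \<beta> * M^2 * H^3"
begin

abbreviation "GG \<equiv> G \<alpha> \<beta> (\<lambda>x. M * x)"
abbreviation "PP \<equiv> Psi \<beta> M H"

lemma calib_lower:
  fixes a b :: real
  assumes "a < b" "step_on a b u"
  shows "GG a b u \<ge> PP b (trace_right b u) - PP a (trace_left a u)"
  using assms(1) assms(2)[unfolded step_on_def]
proof (induction rule: step_induct)
  case (base a b c)
  show ?case using G_piece[OF base] piece_traces[OF base(1,3)] piece_ineq[OF M, of H \<beta> a b c] H \<beta> base(1)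
    by simp
next
  case (split a m b)
  have "PP m (trace_left m u) - PP m (trace_right m u) \<le> \<alpha>"
    using jump_ineq[OF _ \<alpha>] H \<beta> by simp
  then show ?case using G_split_jump[OF split(1,2,4,3), of \<alpha> \<beta> M] split(5,6) by linarith
qed

lemma calib_upper:
  fixes a b :: real
  assumes "a < b" "step_on a b u"
    and T1: "\<And>x. \<bar>x - u x / M\<bar> \<le> H"
    and T2: "\<And>x. x \<in> jump_set u \<Longrightarrow> trace_right x u = M * (x - H) \<and> trace_left x u = M * (x + H)"
  shows "GG a b u \<le> PP b (trace_right b u) - PP a (trace_left a u)"
  using assms(1) assms(2)[unfolded step_on_def]
proof (induction rule: step_induct)
  case (base a b c)
  have l: "a - c/M \<ge> -H"
  proof (rule ccontr)
    assume "\<not> ?thesis"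
    then have lt: "a < min b (c/M - H)" using base(1) by auto
    have "AE y in lebesgue. y \<in> {a<..<min b (c/M - H)} \<longrightarrow> u y = c"
      using base(3) by eventually_elim auto
    from AE_ex_point[OF lt this] obtain y where y: "a < y" "y < c/M - H" "u y = c" by auto
    then show False using T1[of y] by auto
  qed
  have r: "b - c/M \<le> H"
  proof (rule ccontr)
    assume "\<not> ?thesis"
    then have lt: "max a (c/M + H) < b" using base(1) by auto
    have "AE y in lebesgue. y \<in> {max a (c/M + H)<..<b} \<longrightarrow> u y = c"
      using base(3) by eventually_elim auto
    from AE_ex_point[OF lt this] obtain y where y: "y < b" "y > c/M + H" "u y = c" by auto
    then show False using T1[of y] by auto
  qed
  show ?case using G_piece[OF base] piece_traces[OF base(1,3)] piece_eq[OF M _ l r, of \<beta>] H base(1)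
    by simp
next
  case (split a m b)
  have "PP m (trace_left m u) - PP m (trace_right m u) = \<alpha>"
    using jump_eq[OF _ \<alpha> M, of m] T2[OF split(3)] H by simp
  then show ?case using G_split_jump[OF split(1,2,4,3), of \<alpha> \<beta> M] split(5,6) by linarith
qed

lemma calib_elm:
  assumes "S_loc u"
    and T1: "\<And>x. \<bar>x - u x / M\<bar> \<le> H"
    and T2: "\<And>x. x \<in> jump_set u \<Longrightarrow> trace_right x u = M * (x - H) \<and> trace_left x u = M * (x + H)"
  shows "entire_local_min \<alpha> \<beta> (\<lambda>x. M * x) u"
  unfolding entire_local_min_def
proof (intro conjI allI impI assms)
  fix a b :: real assume ab: "a < b"
  show "local_min \<alpha> \<beta> (\<lambda>x. M * x) a b u"
    unfolding local_min_def
  proof (intro conjI allI impI)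
    show su: "step_on a b u" using assms(1) ab by (simp add: S_loc_def)
    fix w assume w: "step_on a b w \<and> trace_left a w = trace_left a u \<and> trace_right b w = trace_right b u"
    show "GG a b u \<le> GG a b w"
      using calib_upper[OF ab su T1 T2] calib_lower[OF ab, of w] w by auto
  qed
qed

end


definition Zs :: "real \<Rightarrow> real \<Rightarrow> real \<Rightarrow> real \<Rightarrow> real" where
  "Zs M l cz x = M * (cz + l * of_int \<lfloor>(x - cz) / l + 1/2\<rfloor>)"

lemma Z_on:
  assumes "l > 0" "cz + of_int k * l - l/2 \<le> x" "x < cz + of_int k * l + l/2"
  shows "Zs M l cz x = M * (cz + of_int k * l)"
proof -
  have "of_int k \<le> (x - cz) / l + 1/2" "(x - cz) / l + 1/2 < of_int k + 1"
    using assms by (auto simp: field_simps)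
  then have "\<lfloor>(x - cz) / l + 1/2\<rfloor> = k" by (simp add: floor_eq_iff)
  then show ?thesis by (simp add: Zs_def mult.commute)
qed

lemma Z_floor_bounds:
  fixes l x cz :: real
  assumes "l > 0"
  defines "k \<equiv> \<lfloor>(x - cz) / l + 1/2\<rfloor>"
  shows "cz + of_int k * l - l/2 \<le> x" "x < cz + of_int k * l + l/2"
proof -
  have "of_int k \<le> (x - cz) / l + 1/2" "(x - cz) / l + 1/2 < of_int k + 1"
    unfolding k_def by linarith+
  then show "cz + of_int k * l - l/2 \<le> x" "x < cz + of_int k * l + l/2"
    using assms(1) by (auto simp: field_simps)
qed

lemma Z_offset:
  assumes "l > 0" "M \<noteq> 0"
  shows "\<bar>x - Zs M l cz x / M\<bar> \<le> l/2"
proof -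
  define k where "k = \<lfloor>(x - cz) / l + 1/2\<rfloor>"
  note b = Z_floor_bounds[OF assms(1), where x=x and cz=cz, folded k_def]
  have "Zs M l cz x / M = cz + of_int k * l" using Z_on[OF assms(1) b] assms(2) by simp
  moreover have "\<bar>x - (cz + of_int k * l)\<bar> \<le> l/2" using b by (subst abs_le_iff) (intro conjI; linarith)
  ultimately show ?thesis by simp
qed

lemma Z_jumps:
  assumes "l > 0" "x \<in> jump_set (Zs M l cz)"
  shows "\<exists>k::int. x = cz + of_int k * l + l/2"
proof (rule ccontr)
  assume nj: "\<not> ?thesis"
  define k where "k = \<lfloor>(x - cz) / l + 1/2\<rfloor>"
  note b = Z_floor_bounds[OF assms(1), where x=x and cz=cz, folded k_def]
  have ne: "x \<noteq> cz + of_int (k - 1) * l + l/2" using nj by blast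
  have lt: "cz + of_int k * l - l/2 < x" using b(1) ne by (auto simp: algebra_simps)
  define e where "e = min (x - (cz + of_int k * l - l/2)) (cz + of_int k * l + l/2 - x)"
  have e: "e > 0" using lt b(2) by (auto simp: e_def)
  have "AE y in lebesgue. dist y x < e \<longrightarrow> Zs M l cz y = M * (cz + of_int k * l)"
  proof (rule AE_I2, rule impI)
    fix y assume "dist y x < e"
    then have "cz + of_int k * l - l/2 \<le> y" "y < cz + of_int k * l + l/2"
      by (auto simp: e_def dist_real_def abs_less_iff)
    then show "Zs M l cz y = M * (cz + of_int k * l)" by (rule Z_on[OF assms(1)])
  qed
  from not_jump[OF e this] assms(2) show False by simp
qed

lemma Z_jump_traces:
  assumes "l > 0" "x = cz + of_int k * l + l/2"
  shows "trace_right x (Zs M l cz) = M * (x - l/2)" "trace_left x (Zs M l cz) = M * (x + l/2)"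
proof -
  have "AE y in lebesgue. y \<in> {x - l<..<x} \<longrightarrow> Zs M l cz y = M * (x - l/2)"
  proof (rule AE_I2, rule impI)
    fix y assume "y \<in> {x - l<..<x}"
    then have "Zs M l cz y = M * (cz + of_int k * l)" using assms by (intro Z_on) auto
    then show "Zs M l cz y = M * (x - l/2)" using assms by simp
  qed
  then show "trace_right x (Zs M l cz) = M * (x - l/2)" using assms(1) by (intro trace_right_eq) auto
  have "AE y in lebesgue. y \<in> {x<..<x+l} \<longrightarrow> Zs M l cz y = M * (x + l/2)"
  proof (rule AE_I2, rule impI)
    fix y assume "y \<in> {x<..<x+l}"
    then have "Zs M l cz y = M * (cz + of_int (k+1) * l)" using assms by (intro Z_on) (auto simp: algebra_simps)
    then show "Zs M l cz y = M * (x + l/2)" using assms by (simp add: algebra_simps)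
  qed
  then show "trace_left x (Zs M l cz) = M * (x + l/2)" using assms(1) by (intro trace_left_eq) auto
qed

lemma Z_S_loc:
  assumes "l > 0"
  shows "S_loc (Zs M l cz)"
  unfolding S_loc_def step_on_def
proof (intro allI impI)
  fix a b :: real assume "a < b"
  define K where "K = {\<lfloor>(a - cz) / l\<rfloor> - 1 .. \<lceil>(b - cz)/l\<rceil>}"
  have "jump_set (Zs M l cz) \<inter> {a<..<b} \<subseteq> (\<lambda>k. cz + of_int k * l + l/2) ` K"
  proof
    fix x assume x: "x \<in> jump_set (Zs M l cz) \<inter> {a<..<b}"
    then obtain k where k: "x = cz + of_int k * l + l/2" using Z_jumps[OF assms] by blast
    have "(a - cz)/l < of_int k + 1/2" "of_int k + 1/2 < (b - cz)/l"
      using x k assms by (auto simp: field_simps)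
    then have "k \<in> K" unfolding K_def by (auto; linarith)
    then show "x \<in> (\<lambda>k. cz + of_int k * l + l/2) ` K" using k by blast
  qed
  moreover have "finite K" by (simp add: K_def)
  ultimately show "finite (jump_set (Zs M l cz) \<inter> {a<..<b})" by (meson finite_subset finite_imageI)
qed

lemma Z_is_jump:
  assumes "l > 0" "M \<noteq> 0" "x = cz + of_int k * l + l/2"
  shows "x \<in> jump_set (Zs M l cz)"
proof (rule jump_I[of l])
  show "AE y in lebesgue. y \<in> {x - l<..<x} \<longrightarrow> Zs M l cz y = M * (cz + of_int k * l)"
    using assms by (intro AE_I2 impI Z_on) auto
  show "AE y in lebesgue. y \<in> {x<..<x+l} \<longrightarrow> Zs M l cz y = M * (cz + of_int (k+1) * l)"
    using assms by (intro AE_I2 impI Z_on) (auto simp: algebra_simps)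
  show "M * (cz + of_int k * l) \<noteq> M * (cz + of_int (k+1) * l)" using assms by (auto simp: algebra_simps)
qed (use assms in auto)

context calib begin

lemma Z_elm: "entire_local_min \<alpha> \<beta> (\<lambda>x. M * x) (Zs M (2*H) cz)"
proof (rule calib_elm)
  show "S_loc (Zs M (2 * H) cz)" using H by (intro Z_S_loc) auto
  show "\<bar>x - Zs M (2 * H) cz x / M\<bar> \<le> H" for x using Z_offset[of "2*H" M x cz] H M by auto
  fix x assume "x \<in> jump_set (Zs M (2 * H) cz)"
  moreover have "0 < 2*H" using H by simp
  ultimately obtain k where k: "x = cz + of_int k * (2*H) + (2*H)/2" using Z_jumps by blast
  show "trace_right x (Zs M (2 * H) cz) = M * (x - H) \<and> trace_left x (Zs M (2 * H) cz) = M * (x + H)"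
    using Z_jump_traces[of "2*H" x cz k M] k H by auto
qed

end

lemma Z_traces_center:
  assumes "l > 0"
  shows "trace_left (cz + of_int k * l) (Zs M l cz) = M * (cz + of_int k * l)"
        "trace_right (cz + of_int k * l) (Zs M l cz) = M * (cz + of_int k * l)"
proof -
  show "trace_left (cz + of_int k * l) (Zs M l cz) = M * (cz + of_int k * l)"
    using assms by (intro trace_left_eq[of "l/2"] AE_I2 impI Z_on) auto
  show "trace_right (cz + of_int k * l) (Zs M l cz) = M * (cz + of_int k * l)"
    using assms by (intro trace_right_eq[of "l/2"] AE_I2 impI Z_on) auto
qed

lemma Z_period_cost:
  fixes l cz M :: real and k :: int
  assumes "l > 0" "M \<noteq> 0"
  defines "m \<equiv> cz + of_int k * l"
  shows "G \<alpha> \<beta> (\<lambda>x. M * x) m (m + l) (Zs M l cz) = \<alpha> + \<beta> * M^2 * l^3 / 12"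
proof -
  let ?Z = "Zs M l cz"
  have fin: "finite (jump_set ?Z \<inter> {m<..<m+l})" using Z_S_loc[OF assms(1)] assms(1)
    by (auto simp: S_loc_def step_on_def)
  have mj: "m + l/2 \<in> jump_set ?Z" using Z_is_jump[OF assms(1,2)] by (auto simp: m_def)
  have nj1: "jump_set ?Z \<inter> {m<..<m + l/2} = {}"
  proof (rule ccontr)
    assume "\<not> ?thesis"
    then obtain x where x: "x \<in> jump_set ?Z" "m < x" "x < m + l/2" by auto
    then obtain j where j: "x = cz + of_int j * l + l/2" using Z_jumps[OF assms(1)] by blast
    have 1: "of_int k * l < of_int j * l + l/2" "of_int j * l < of_int k * l" using x j by (auto simp: m_def)
    then have "j < k" using assms(1) by (simp add: mult_less_cancel_right_pos)
    then have "of_int k \<ge> of_int j + (1::real)" by linarith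
    then have "of_int k * l \<ge> (of_int j + 1) * l" using assms(1) by (intro mult_right_mono) auto
    then show False using 1 assms(1) by (simp add: algebra_simps)
  qed
  have nj2: "jump_set ?Z \<inter> {m + l/2<..<m + l} = {}"
  proof (rule ccontr)
    assume "\<not> ?thesis"
    then obtain x where x: "x \<in> jump_set ?Z" "m + l/2 < x" "x < m + l" by auto
    then obtain j where j: "x = cz + of_int j * l + l/2" using Z_jumps[OF assms(1)] by blast
    have 1: "of_int k * l < of_int j * l" "of_int j * l + l/2 < of_int k * l + l" using x j by (auto simp: m_def)
    then have "k < j" using assms(1) by (simp add: mult_less_cancel_right_pos)
    then have "of_int j \<ge> of_int k + (1::real)" by linarith
    then have "of_int j * l \<ge> (of_int k + 1) * l" using assms(1) by (intro mult_right_mono) auto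
    then show False using 1 assms(1) by (simp add: algebra_simps)
  qed
  have A1: "AE y in lebesgue. y \<in> {m<..<m + l/2} \<longrightarrow> ?Z y = M * m"
    using assms(1) unfolding m_def by (intro AE_I2 impI Z_on) auto
  have A2: "AE y in lebesgue. y \<in> {m + l/2<..<m + l} \<longrightarrow> ?Z y = M * (m + l)"
  proof (rule AE_I2, rule impI)
    fix y assume y: "y \<in> {m + l/2<..<m + l}"
    have "?Z y = M * (cz + of_int (k+1) * l)"
      by (rule Z_on) (use assms(1) y in \<open>auto simp: m_def algebra_simps\<close>)
    then show "?Z y = M * (m + l)" by (simp add: m_def algebra_simps)
  qed
  have "G \<alpha> \<beta> (\<lambda>x. M * x) m (m + l) ?Z = G \<alpha> \<beta> (\<lambda>x. M * x) m (m + l/2) ?Z + G \<alpha> \<beta> (\<lambda>x. M * x) (m + l/2) (m + l) ?Z + \<alpha>"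
    using assms(1) fin mj by (intro G_split_jump) auto
  also have "G \<alpha> \<beta> (\<lambda>x. M * x) m (m + l/2) ?Z = \<beta> * Ipoly M (M * m) m (m + l/2)"
    using assms(1) nj1 A1 by (intro G_piece) auto
  also have "G \<alpha> \<beta> (\<lambda>x. M * x) (m + l/2) (m + l) ?Z = \<beta> * Ipoly M (M * (m + l)) (m + l/2) (m + l)"
    using assms(1) nj2 A2 by (intro G_piece) auto
  also have "Ipoly M (M * m) m (m + l/2) = M^2 * l^3 / 24"
    using assms(2) by (simp add: Ipoly_shift power3_eq_cube)
  also have "Ipoly M (M * (m + l)) (m + l/2) (m + l) = M^2 * l^3 / 24"
    using assms(2) by (simp add: Ipoly_shift power3_eq_cube)
  finally show ?thesis by (simp add: algebra_simps)
qed

lemma Z_cost: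
  assumes "l > 0" "M \<noteq> 0" "n \<ge> 1"
  shows "G \<alpha> \<beta> (\<lambda>x. M * x) cz (cz + real n * l) (Zs M l cz) = real n * (\<alpha> + \<beta> * M^2 * l^3 / 12)"
  using assms(3)
proof (induction n rule: dec_induct)
  case base
  then show ?case using Z_period_cost[OF assms(1,2), where cz=cz and k=0 and \<alpha>=\<alpha> and \<beta>=\<beta>] by simp
next
  case (step n)
  let ?Z = "Zs M l cz"
  have fin: "finite (jump_set ?Z \<inter> {cz<..<cz + real (Suc n) * l})" using Z_S_loc[OF assms(1)] assms(1)
    by (auto simp: S_loc_def step_on_def)
  have nj: "cz + real n * l \<notin> jump_set ?Z"
  proof
    assume "cz + real n * l \<in> jump_set ?Z"
    then obtain j where j: "cz + real n * l = cz + of_int j * l + l/2" using Z_jumps[OF assms(1)] by blast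
    then have "l * (2 * real n - 1 - 2 * of_int j) = 0" by (simp add: algebra_simps)
    then have "2 * real n - 1 - 2 * of_int j = 0" using assms(1) by simp
    then have "real n = of_int j + 1/2" by simp
    then have "of_int (2 * int n) = (of_int (2 * j + 1) :: real)" by simp
    then have "2 * int n = 2 * j + 1" by (simp only: of_int_eq_iff)
    then show False by presburger
  qed
  have "G \<alpha> \<beta> (\<lambda>x. M * x) cz (cz + real (Suc n) * l) ?Z =
        G \<alpha> \<beta> (\<lambda>x. M * x) cz (cz + real n * l) ?Z + G \<alpha> \<beta> (\<lambda>x. M * x) (cz + real n * l) (cz + real (Suc n) * l) ?Z"
    using step(1) assms(1) fin nj by (intro G_split_nojump) (auto simp: algebra_simps)
  also have "G \<alpha> \<beta> (\<lambda>x. M * x) (cz + real n * l) (cz + real (Suc n) * l) ?Z = \<alpha> + \<beta> * M^2 * l^3 / 12"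
    using Z_period_cost[OF assms(1,2), where cz=cz and k="int n" and \<alpha>=\<alpha> and \<beta>=\<beta>] by (simp add: algebra_simps)
  finally show ?case using step(3) by (simp add: algebra_simps)
qed


lemma AE_not_countable:
  assumes "countable C"
  shows "AE y in lebesgue. y \<notin> C"
proof -
  have "C \<in> null_sets lborel" by (rule countable_imp_null_set_lborel[OF assms])
  then have "AE y in lborel. y \<notin> C" by (rule AE_I') auto
  then show ?thesis by (rule AE_completion)
qed

lemma Ipoly_diff:
  "Ipoly M c s t - Ipoly M d s t = (t - s) * (c - d) * (c + d - M * (s + t))"
  by (simp add: Ipoly_def power2_eq_square algebra_simps)

lemma replace_lemma:
  fixes a s t b d :: real
  assumes ast: "a < s" "s < t" "t < b" and fin: "finite (jump_set v \<inter> {a<..<b})"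
    and vc: "AE y in lebesgue. y \<in> {s<..<t} \<longrightarrow> v y = c"
  defines "u \<equiv> (\<lambda>x. if x \<in> {s<..<t} then d else v x)"
  shows "jump_set u \<inter> {a<..<b} \<subseteq> (jump_set v \<inter> {a<..<b} - {s<..<t}) \<union> {s, t}"
    and "trace_left a u = trace_left a v" "trace_right b u = trace_right b v"
    and "step_on a b u"
    and "integral {a..b} (\<lambda>x. (u x - M * x)\<^sup>2) =
           integral {a..b} (\<lambda>x. (v x - M * x)\<^sup>2) - Ipoly M c s t + Ipoly M d s t"
proof -
  show J: "jump_set u \<inter> {a<..<b} \<subseteq> (jump_set v \<inter> {a<..<b} - {s<..<t}) \<union> {s, t}"
  proof
    fix x assume x: "x \<in> jump_set u \<inter> {a<..<b}"
    consider "x < s" | "x = s" | "s < x \<and> x < t" | "x = t" | "x > t" by linarith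
    then show "x \<in> (jump_set v \<inter> {a<..<b} - {s<..<t}) \<union> {s, t}"
    proof cases
      case 1
      have "AE y in lebesgue. dist y x < s - x \<longrightarrow> u y = v y"
        by (rule AE_I2) (auto simp: u_def dist_real_def)
      then have "x \<in> jump_set v" using jump_set_cong[of "s - x" x u v] 1 x by auto
      then show ?thesis using x 1 by auto
    next
      case 5
      have "AE y in lebesgue. dist y x < x - t \<longrightarrow> u y = v y"
        by (rule AE_I2) (auto simp: u_def dist_real_def)
      then have "x \<in> jump_set v" using jump_set_cong[of "x - t" x u v] 5 x by auto
      then show ?thesis using x 5 by auto
    next
      case 3
      have "AE y in lebesgue. dist y x < min (x - s) (t - x) \<longrightarrow> u y = d"
        by (rule AE_I2) (auto simp: u_def dist_real_def)
      then have "x \<notin> jump_set u" using not_jump[of "min (x - s) (t - x)" x u d] 3 by auto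
      then show ?thesis using x by auto
    qed auto
  qed
  show "trace_left a u = trace_left a v"
    by (rule trace_left_cong[of "s - a"]) (use ast in \<open>auto simp: u_def intro!: AE_I2\<close>)
  show "trace_right b u = trace_right b v"
    by (rule trace_right_cong[of "b - t"]) (use ast in \<open>auto simp: u_def intro!: AE_I2\<close>)
  have "finite ((jump_set v \<inter> {a<..<b} - {s<..<t}) \<union> {s, t})" using fin by auto
  then show st: "step_on a b u" unfolding step_on_def using finite_subset[OF J] by blast
  have iv: "(\<lambda>x. (v x - M * x)\<^sup>2) integrable_on {a..b}" using step_integrable[of a b v M] ast fin by simp
  have iv1: "((\<lambda>x. (v x - M * x)\<^sup>2) has_integral integral {a..s} (\<lambda>x. (v x - M * x)\<^sup>2)) {a..s}"
    using integrable_subinterval_real[OF iv, of a s] ast by (simp add: integrable_integral)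
  have iv3: "((\<lambda>x. (v x - M * x)\<^sup>2) has_integral integral {t..b} (\<lambda>x. (v x - M * x)\<^sup>2)) {t..b}"
    using integrable_subinterval_real[OF iv, of t b] ast by (simp add: integrable_integral)
  have iv2: "((\<lambda>x. (v x - M * x)\<^sup>2) has_integral Ipoly M c s t) {s..t}"
    using piece_has_integral[OF _ vc, of M] ast by simp
  have iu1: "((\<lambda>x. (u x - M * x)\<^sup>2) has_integral integral {a..s} (\<lambda>x. (v x - M * x)\<^sup>2)) {a..s}"
    by (rule has_integral_spike[OF negligible_empty _ iv1]) (auto simp: u_def)
  have iu3: "((\<lambda>x. (u x - M * x)\<^sup>2) has_integral integral {t..b} (\<lambda>x. (v x - M * x)\<^sup>2)) {t..b}"
    by (rule has_integral_spike[OF negligible_empty _ iv3]) (auto simp: u_def)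
  have iu2: "((\<lambda>x. (u x - M * x)\<^sup>2) has_integral Ipoly M d s t) {s..t}"
    using piece_has_integral[of s t u d M] ast by (auto simp: u_def intro!: AE_I2)
  have V: "((\<lambda>x. (v x - M * x)\<^sup>2) has_integral
     integral {a..s} (\<lambda>x. (v x - M * x)\<^sup>2) + Ipoly M c s t + integral {t..b} (\<lambda>x. (v x - M * x)\<^sup>2)) {a..b}"
    using has_integral_combine[OF _ _ has_integral_combine[OF _ _ iv1 iv2] iv3] ast by simp
  have U: "((\<lambda>x. (u x - M * x)\<^sup>2) has_integral
     integral {a..s} (\<lambda>x. (v x - M * x)\<^sup>2) + Ipoly M d s t + integral {t..b} (\<lambda>x. (v x - M * x)\<^sup>2)) {a..b}"
    using has_integral_combine[OF _ _ has_integral_combine[OF _ _ iu1 iu2] iu3] ast by simp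
  show "integral {a..b} (\<lambda>x. (u x - M * x)\<^sup>2) =
           integral {a..b} (\<lambda>x. (v x - M * x)\<^sup>2) - Ipoly M c s t + Ipoly M d s t"
    using integral_unique[OF U] integral_unique[OF V] by simp
qed

lemma local_min_replace:
  fixes a s t b d :: real
  assumes lm: "local_min \<alpha> \<beta> (\<lambda>x. M * x) a b v"
    and ast: "a < s" "s < t" "t < b"
    and vc: "AE y in lebesgue. y \<in> {s<..<t} \<longrightarrow> v y = c"
  defines "u \<equiv> (\<lambda>x. if x \<in> {s<..<t} then d else v x)"
  shows "\<alpha> * real (card (jump_set v \<inter> {a<..<b})) + \<beta> * Ipoly M c s t \<le>
         \<alpha> * real (card (jump_set u \<inter> {a<..<b})) + \<beta> * Ipoly M d s t"
proof -
  have fin: "finite (jump_set v \<inter> {a<..<b})" using lm by (simp add: local_min_def step_on_def)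
  note R = replace_lemma[OF ast fin vc, where d=d, folded u_def]
  have "G \<alpha> \<beta> (\<lambda>x. M * x) a b v \<le> G \<alpha> \<beta> (\<lambda>x. M * x) a b u"
    using lm R(2-4) unfolding local_min_def by auto
  then have h: "\<alpha> * real (card (jump_set v \<inter> {a<..<b})) + \<beta> * integral {a..b} (\<lambda>x. (v x - M * x)\<^sup>2) \<le>
      \<alpha> * real (card (jump_set u \<inter> {a<..<b})) + \<beta> * integral {a..b} (\<lambda>x. (u x - M * x)\<^sup>2)"
    by (simp add: G_def)
  have "\<beta> * integral {a..b} (\<lambda>x. (u x - M * x)\<^sup>2) =
        \<beta> * integral {a..b} (\<lambda>x. (v x - M * x)\<^sup>2) - \<beta> * Ipoly M c s t + \<beta> * Ipoly M d s t"
  proof -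
    have e: "integral {a..b} (\<lambda>x. (u x - M * x)\<^sup>2) =
       integral {a..b} (\<lambda>x. (v x - M * x)\<^sup>2) - Ipoly M c s t + Ipoly M d s t"
      using R(5)[of M] by (simp add: u_def)
    show ?thesis unfolding e by (simp add: algebra_simps)
  qed
  then show ?thesis using h by linarith
qed

lemma card_le_plus2:
  assumes "finite A" "B \<subseteq> A \<union> {s, t}"
  shows "card B \<le> card A + 2"
proof -
  have "card B \<le> card (A \<union> {s, t})" using assms by (intro card_mono) auto
  also have "\<dots> \<le> card A + card {s, t}" by (rule card_Un_le)
  also have "card {s, t} \<le> 2" by (simp add: card_insert_if)
  finally show ?thesis by simp
qed

lemma sq_ge1:
  fixes z :: real
  assumes "1 \<le> \<bar>z\<bar>"
  shows "1 \<le> z^2"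
proof -
  have "1 * 1 \<le> \<bar>z\<bar> * \<bar>z\<bar>" by (rule mult_mono) (use assms in auto)
  then show ?thesis by (simp add: power2_eq_square abs_mult_self_eq)
qed

locale elm =
  fixes \<alpha> \<beta> M :: real and v :: "real \<Rightarrow> real"
  assumes \<alpha>: "\<alpha> > 0" and \<beta>: "\<beta> > 0" and E: "entire_local_min \<alpha> \<beta> (\<lambda>x. M * x) v"
begin

abbreviation "J \<equiv> jump_set v"

lemma lm: "a < b \<Longrightarrow> local_min \<alpha> \<beta> (\<lambda>x. M * x) a b v"
  using E by (simp add: entire_local_min_def)

lemma finJ: "finite (J \<inter> {a<..<b})"
proof (cases "a < b")
  case True then show ?thesis using E by (simp add: entire_local_min_def S_loc_def step_on_def)
next
  case False then show ?thesis by simp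
qed

lemma unb_piece_aux:
  assumes "x0 < s" "R > 0" "AE y in lebesgue. y \<in> {s<..<s + 2*R} \<longrightarrow> v y = c"
  shows "R * (c - M * (s + R))^2 \<le> \<alpha> / \<beta>"
proof -
  define a where "a = s - 1"
  define b where "b = s + 2*R + 1"
  let ?u = "(\<lambda>x. if x \<in> {s<..<s + 2*R} then M * (s + R) else v x)"
  have ast: "a < s" "s < s + 2*R" "s + 2*R < b" using assms by (auto simp: a_def b_def)
  have ab: "a < b" using ast by simp
  note ineq = local_min_replace[OF lm[OF ab] ast assms(3), of "M * (s + R)"]
  note R1 = replace_lemma(1)[OF ast finJ assms(3), of "M * (s + R)"]
  have "card (jump_set ?u \<inter> {a<..<b}) \<le> card (J \<inter> {a<..<b}) + 2"
    using R1 finJ by (intro card_le_plus2) auto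
  then have "real (card (jump_set ?u \<inter> {a<..<b})) \<le> real (card (J \<inter> {a<..<b})) + 2" by linarith
  then have "\<alpha> * real (card (jump_set ?u \<inter> {a<..<b})) \<le> \<alpha> * (real (card (J \<inter> {a<..<b})) + 2)"
    using \<alpha> by (intro mult_left_mono) auto
  then have "\<alpha> * real (card (jump_set ?u \<inter> {a<..<b})) \<le> \<alpha> * real (card (J \<inter> {a<..<b})) + 2 * \<alpha>"
    by (simp add: algebra_simps)
  then have "\<beta> * (Ipoly M c s (s + 2*R) - Ipoly M (M * (s + R)) s (s + 2*R)) \<le> 2 * \<alpha>"
    using ineq ast by (simp add: algebra_simps)
  moreover have "Ipoly M c s (s + 2*R) - Ipoly M (M * (s + R)) s (s + 2*R) = 2 * R * (c - M * (s + R))^2"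
    unfolding Ipoly_diff by (simp add: power2_eq_square algebra_simps)
  ultimately have "\<beta> * (R * (c - M * (s + R))^2) \<le> \<alpha>" by simp
  then show ?thesis using \<beta> by (simp add: field_simps)
qed

lemma unb_right:
  assumes "AE y in lebesgue. y \<in> {x0<..} \<longrightarrow> v y = c"
  shows "M = 0 \<and> c = 0"
proof (rule ccontr)
  assume nz: "\<not> (M = 0 \<and> c = 0)"
  obtain R s where Rs: "R > 0" "x0 < s" "R * (c - M * (s + R))^2 > \<alpha> / \<beta>"
  proof (cases "M = 0")
    case True
    then have c: "c \<noteq> 0" using nz by auto
    define R where "R = \<alpha> / (\<beta> * c^2) + 1"
    have "R * c^2 = \<alpha> / \<beta> + c^2" using c by (simp add: R_def field_simps)
    moreover have "c^2 > 0" using c by simp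
    ultimately have "R * (c - M * (x0 + 1 + R))^2 > \<alpha> / \<beta>" using True by simp
    moreover have "R > 0"
    proof -
      have "\<alpha> / (\<beta> * c^2) \<ge> 0" using \<alpha> \<beta> by (intro divide_nonneg_nonneg) auto
      then show ?thesis by (simp add: R_def)
    qed
    ultimately show ?thesis using that[of R "x0 + 1"] by simp
  next
    case False
    define R where "R = \<alpha> / \<beta> + 1"
    define s where "s = \<bar>x0\<bar> + 1 + (\<bar>c\<bar> + 1) / \<bar>M\<bar>"
    have sR: "s + R \<ge> (\<bar>c\<bar> + 1) / \<bar>M\<bar>" "s + R \<ge> 0" using \<alpha> \<beta> by (auto simp: s_def R_def)
    have "\<bar>M\<bar> * (s + R) \<ge> \<bar>M\<bar> * ((\<bar>c\<bar> + 1) / \<bar>M\<bar>)" using sR(1) by (intro mult_left_mono) auto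
    then have "\<bar>M * (s + R)\<bar> \<ge> \<bar>c\<bar> + 1" using False sR(2) by (simp add: abs_mult)
    then have "\<bar>c - M * (s + R)\<bar> \<ge> 1" by linarith
    then have "(c - M * (s + R))^2 \<ge> 1" by (rule sq_ge1)
    then have "R * 1 \<le> R * (c - M * (s + R))^2" using \<alpha> \<beta> by (intro mult_left_mono) (auto simp: R_def)
    then have "R * (c - M * (s + R))^2 \<ge> R" by simp
    moreover have "R > \<alpha> / \<beta>" by (simp add: R_def)
    ultimately have big: "R * (c - M * (s + R))^2 > \<alpha> / \<beta>" by linarith
    have Rpos: "R > 0" using divide_pos_pos[OF \<alpha> \<beta>] by (simp add: R_def)
    have "(\<bar>c\<bar> + 1) / \<bar>M\<bar> \<ge> 0" by simp
    then have xs: "x0 < s" unfolding s_def by linarith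
    show ?thesis using that[OF Rpos xs big] .
  qed
  have "AE y in lebesgue. y \<in> {s<..<s + 2*R} \<longrightarrow> v y = c" using assms by eventually_elim (use Rs in auto)
  from unb_piece_aux[OF Rs(2,1) this] Rs(3) show False by simp
qed

lemma unb_left:
  assumes "AE y in lebesgue. y \<in> {..<x0} \<longrightarrow> v y = c"
  shows "M = 0 \<and> c = 0"
proof (rule ccontr)
  assume nz: "\<not> (M = 0 \<and> c = 0)"
  obtain R s where Rs: "R > 0" "s + 2*R < x0" "R * (c - M * (s + R))^2 > \<alpha> / \<beta>"
  proof (cases "M = 0")
    case True
    then have c: "c \<noteq> 0" using nz by auto
    define R where "R = \<alpha> / (\<beta> * c^2) + 1"
    have "R * c^2 = \<alpha> / \<beta> + c^2" using c by (simp add: R_def field_simps)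
    moreover have "c^2 > 0" using c by simp
    ultimately have "R * (c - M * ((x0 - 1 - 2*R) + R))^2 > \<alpha> / \<beta>" using True by simp
    moreover have "R > 0"
    proof -
      have "\<alpha> / (\<beta> * c^2) \<ge> 0" using \<alpha> \<beta> by (intro divide_nonneg_nonneg) auto
      then show ?thesis by (simp add: R_def)
    qed
    ultimately show ?thesis using that[of R "x0 - 1 - 2*R"] by simp
  next
    case False
    define R where "R = \<alpha> / \<beta> + 1"
    define s where "s = - \<bar>x0\<bar> - 1 - 3 * R - (\<bar>c\<bar> + 1) / \<bar>M\<bar>"
    have Rpos: "R > 0" using divide_pos_pos[OF \<alpha> \<beta>] by (simp add: R_def)
    have "(\<bar>c\<bar> + 1) / \<bar>M\<bar> \<ge> 0" by simp
    then have sR: "-(s + R) \<ge> (\<bar>c\<bar> + 1) / \<bar>M\<bar>" "s + R \<le> 0" using Rpos unfolding s_def by linarith+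
    have "\<bar>M\<bar> * (-(s + R)) \<ge> \<bar>M\<bar> * ((\<bar>c\<bar> + 1) / \<bar>M\<bar>)" using sR(1) by (intro mult_left_mono) auto
    then have "\<bar>M * (s + R)\<bar> \<ge> \<bar>c\<bar> + 1" using False sR(2) by (simp add: abs_mult)
    then have "\<bar>c - M * (s + R)\<bar> \<ge> 1" by linarith
    then have "(c - M * (s + R))^2 \<ge> 1" by (rule sq_ge1)
    then have "R * 1 \<le> R * (c - M * (s + R))^2" using \<alpha> \<beta> by (intro mult_left_mono) (auto simp: R_def)
    then have "R * (c - M * (s + R))^2 \<ge> R" by simp
    moreover have "R > \<alpha> / \<beta>" by (simp add: R_def)
    ultimately have big: "R * (c - M * (s + R))^2 > \<alpha> / \<beta>" by linarith
    have "(\<bar>c\<bar> + 1) / \<bar>M\<bar> \<ge> 0" by simp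
    then have xs: "s + 2*R < x0" using Rpos unfolding s_def by linarith
    show ?thesis using that[OF Rpos xs big] .
  qed
  have "AE y in lebesgue. y \<in> {s<..<s + 2*R} \<longrightarrow> v y = c" using assms by eventually_elim (use Rs in auto)
  from unb_piece_aux[of "s - 1", OF _ Rs(1) this] Rs(3) show False by simp
qed

lemma no_jump_right:
  assumes "\<not> (\<exists>j\<in>J. j > x0)"
  shows "\<exists>c. (AE y in lebesgue. y \<in> {x0<..} \<longrightarrow> v y = c) \<and> M = 0 \<and> c = 0"
proof -
  have "\<exists>c. AE y in lebesgue. y \<in> {x0<..} \<longrightarrow> v y = c"
    by (rule no_jump_const) (use assms in \<open>auto simp: connected_Ioi\<close>)
  then obtain c where c: "AE y in lebesgue. y \<in> {x0<..} \<longrightarrow> v y = c" by blast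
  then show ?thesis using unb_right[OF c] by blast
qed

lemma no_jump_left:
  assumes "\<not> (\<exists>j\<in>J. j < x0)"
  shows "\<exists>c. (AE y in lebesgue. y \<in> {..<x0} \<longrightarrow> v y = c) \<and> M = 0 \<and> c = 0"
proof -
  have "\<exists>c. AE y in lebesgue. y \<in> {..<x0} \<longrightarrow> v y = c"
    by (rule no_jump_const) (use assms in \<open>auto simp: connected_Iio\<close>)
  then obtain c where c: "AE y in lebesgue. y \<in> {..<x0} \<longrightarrow> v y = c" by blast
  then show ?thesis using unb_left[OF c] by blast
qed

lemma next_jump:
  assumes "j \<in> J" "j > x"
  shows "\<exists>q\<in>J. q > x \<and> J \<inter> {x<..<q} = {}"
proof -
  define F where "F = J \<inter> {x<..<j+1}"
  have "finite F" "F \<noteq> {}" using finJ assms by (auto simp: F_def)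
  define q where "q = Min F"
  have q: "q \<in> F" using Min_in[OF \<open>finite F\<close> \<open>F \<noteq> {}\<close>] by (simp add: q_def)
  have "J \<inter> {x<..<q} = {}"
  proof (rule ccontr)
    assume "\<not> ?thesis"
    then obtain z where z: "z \<in> J" "x < z" "z < q" by auto
    then have "z \<in> F" using q by (auto simp: F_def)
    then have "q \<le> z" using Min_le[OF \<open>finite F\<close>] by (simp add: q_def)
    then show False using z by simp
  qed
  then show ?thesis using q by (auto simp: F_def)
qed

lemma prev_jump:
  assumes "j \<in> J" "j < x"
  shows "\<exists>p\<in>J. p < x \<and> J \<inter> {p<..<x} = {}"
proof -
  define F where "F = J \<inter> {j-1<..<x}"
  have "finite F" "F \<noteq> {}" using finJ assms by (auto simp: F_def)
  define p where "p = Max F"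
  have p: "p \<in> F" using Max_in[OF \<open>finite F\<close> \<open>F \<noteq> {}\<close>] by (simp add: p_def)
  have "J \<inter> {p<..<x} = {}"
  proof (rule ccontr)
    assume "\<not> ?thesis"
    then obtain z where z: "z \<in> J" "p < z" "z < x" by auto
    then have "z \<in> F" using p by (auto simp: F_def)
    then have "z \<le> p" using Max_ge[OF \<open>finite F\<close>] by (simp add: p_def)
    then show False using z by simp
  qed
  then show ?thesis using p by (auto simp: F_def)
qed

lemma piece_const:
  assumes "p < q" "J \<inter> {p<..<q} = {}"
  shows "\<exists>c. AE y in lebesgue. y \<in> {p<..<q} \<longrightarrow> v y = c"
  by (rule no_jump_const) (use assms in \<open>auto simp: connected_Ioo\<close>)

lemma centered:
  assumes "p < q" "p \<in> J" "q \<in> J" "J \<inter> {p<..<q} = {}"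
    and c: "AE y in lebesgue. y \<in> {p<..<q} \<longrightarrow> v y = c"
  shows "c = M * (p + q) / 2"
proof -
  define d where "d = M * (p + q) / 2"
  define a where "a = p - 1"
  define b where "b = q + 1"
  let ?u = "(\<lambda>x. if x \<in> {p<..<q} then d else v x)"
  have ast: "a < p" "p < q" "q < b" using assms by (auto simp: a_def b_def)
  have ab: "a < b" using ast by simp
  note ineq = local_min_replace[OF lm[OF ab] ast c, of d]
  note R1 = replace_lemma(1)[OF ast finJ c, of d]
  have "jump_set ?u \<inter> {a<..<b} \<subseteq> J \<inter> {a<..<b}" using R1 assms ast by auto
  then have "card (jump_set ?u \<inter> {a<..<b}) \<le> card (J \<inter> {a<..<b})" using finJ by (intro card_mono) auto
  then have "\<alpha> * real (card (jump_set ?u \<inter> {a<..<b})) \<le> \<alpha> * real (card (J \<inter> {a<..<b}))"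
    using \<alpha> by (intro mult_left_mono) auto
  then have "\<beta> * Ipoly M c p q \<le> \<beta> * Ipoly M d p q" using ineq by linarith
  then have "\<beta> * (Ipoly M c p q - Ipoly M d p q) \<le> 0" by (simp add: algebra_simps)
  moreover have "Ipoly M c p q - Ipoly M d p q = (q - p) * (c - d)^2"
  proof -
    have "c + d - M * (p + q) = c - d" by (simp add: d_def)
    then show ?thesis unfolding Ipoly_diff by (simp add: power2_eq_square)
  qed
  ultimately have "(q - p) * (c - d)^2 \<le> 0" using \<beta> by (simp add: mult_le_0_iff)
  then have "(c - d)^2 \<le> 0" using assms(1) by (simp add: mult_le_0_iff)
  then show ?thesis by (simp add: d_def)
qed

lemma same_sides_no_jump:
  assumes "e > 0" "AE y in lebesgue. y \<in> {x-e<..<x} \<longrightarrow> v y = c"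
    "AE y in lebesgue. y \<in> {x<..<x+e} \<longrightarrow> v y = c"
  shows "x \<notin> J"
proof -
  have "AE y in lebesgue. y \<notin> {x}" by (rule AE_not_countable) auto
  then have "AE y in lebesgue. dist y x < e \<longrightarrow> v y = c"
    using assms(2,3) by eventually_elim (auto simp: dist_real_def abs_less_iff)
  then show ?thesis using not_jump[OF assms(1)] by blast
qed

end


lemma same_sides_nj:
  assumes "e > 0" "AE y in lebesgue. y \<in> {x-e<..<x} \<longrightarrow> u y = c"
    "AE y in lebesgue. y \<in> {x<..<x+e} \<longrightarrow> u y = c"
  shows "x \<notin> jump_set u"
proof -
  have "AE y in lebesgue. y \<notin> {x}" by (rule AE_not_countable) auto
  then have "AE y in lebesgue. dist y x < e \<longrightarrow> u y = c"
    using assms(2,3) by eventually_elim (auto simp: dist_real_def abs_less_iff)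
  then show ?thesis using not_jump[OF assms(1)] by blast
qed

lemma small_bound:
  fixes X K d0 :: real
  assumes "\<And>d. 0 < d \<Longrightarrow> d < d0 \<Longrightarrow> \<bar>X\<bar> \<le> K * d" "d0 > 0" "K \<ge> 0"
  shows "X = 0"
proof (rule ccontr)
  assume X: "X \<noteq> 0"
  define d where "d = min (d0/2) (\<bar>X\<bar> / (2*K + 1))"
  have d: "0 < d" "d < d0" using X assms by (auto simp: d_def)
  have "K * d \<le> K * (\<bar>X\<bar> / (2*K + 1))" using assms(3) by (intro mult_left_mono) (auto simp: d_def)
  also have "\<dots> < \<bar>X\<bar>"
  proof -
    have "K * \<bar>X\<bar> < \<bar>X\<bar> * (2*K + 1)" using X assms(3) by (simp add: algebra_simps add_pos_nonneg)
    then show ?thesis using assms(3) by (simp add: field_simps)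
  qed
  finally show False using assms(1)[OF d] by simp
qed

lemma card_swap:
  assumes "finite A" "x \<in> A" "B \<subseteq> (A - {x}) \<union> {y}"
  shows "card B \<le> card A"
proof -
  have "card B \<le> card ((A - {x}) \<union> {y})" using assms by (intro card_mono) auto
  also have "\<dots> \<le> card (A - {x}) + 1" using card_Un_le[of "A - {x}" "{y}"] by simp
  also have "\<dots> = card A" using assms by (simp add: card_Diff_singleton) (metis Suc_pred card_gt_0_iff empty_iff)
  finally show ?thesis .
qed

context elm begin

lemma midpoint:
  assumes px: "p < x" and xq: "x < q" and xJ: "x \<in> J"
    and c1: "AE y in lebesgue. y \<in> {p<..<x} \<longrightarrow> v y = c1"
    and c2: "AE y in lebesgue. y \<in> {x<..<q} \<longrightarrow> v y = c2"
  shows "c1 + c2 = 2 * M * x"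
proof -
  define d0 where "d0 = min (x - p) (q - x)"
  have d0: "d0 > 0" using px xq by (simp add: d0_def)
  have ne: "c1 \<noteq> c2"
  proof
    assume "c1 = c2"
    have "AE y in lebesgue. y \<in> {x - d0<..<x} \<longrightarrow> v y = c1" using c1 by eventually_elim (auto simp: d0_def)
    moreover have "AE y in lebesgue. y \<in> {x<..<x + d0} \<longrightarrow> v y = c1" using c2
      by eventually_elim (use \<open>c1 = c2\<close> in \<open>auto simp: d0_def\<close>)
    ultimately have "x \<notin> J" using same_sides_nj[OF d0] by blast
    then show False using xJ by simp
  qed
  define a where "a = p - 1"
  define b where "b = q + 1"
  have ab: "a < b" using px xq by (simp add: a_def b_def)
  have xab: "x \<in> J \<inter> {a<..<b}" using xJ px xq by (simp add: a_def b_def)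
  define A where "A = c1 - c2"
  define B where "B = c1 + c2 - 2 * M * x"
  have bound: "\<bar>A * B\<bar> \<le> \<bar>A * M\<bar> * d" if d: "0 < d" "d < d0" for d
  proof -
    have ast1: "a < x" "x < x + d" "x + d < b" using d px xq by (auto simp: a_def b_def d0_def)
    have v1: "AE y in lebesgue. y \<in> {x<..<x + d} \<longrightarrow> v y = c2" using c2 by eventually_elim (use d in \<open>auto simp: d0_def\<close>)
    let ?u1 = "\<lambda>z. if z \<in> {x<..<x + d} then c1 else v z"
    have "AE y in lebesgue. y \<in> {x - min (x - p) d<..<x} \<longrightarrow> ?u1 y = c1" using c1 by eventually_elim auto
    moreover have "AE y in lebesgue. y \<in> {x<..<x + min (x - p) d} \<longrightarrow> ?u1 y = c1" by (rule AE_I2) auto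
    ultimately have "x \<notin> jump_set ?u1" using same_sides_nj[of "min (x - p) d"] px d by auto
    then have "jump_set ?u1 \<inter> {a<..<b} \<subseteq> (J \<inter> {a<..<b} - {x}) \<union> {x + d}"
      using replace_lemma(1)[OF ast1 finJ v1, of c1] by auto
    then have "card (jump_set ?u1 \<inter> {a<..<b}) \<le> card (J \<inter> {a<..<b})"
      using card_swap[OF finJ xab] by blast
    then have "\<alpha> * card (jump_set ?u1 \<inter> {a<..<b}) \<le> \<alpha> * card (J \<inter> {a<..<b})"
      using \<alpha> by (intro mult_left_mono) auto
    then have "\<beta> * Ipoly M c2 x (x + d) \<le> \<beta> * Ipoly M c1 x (x + d)"
      using local_min_replace[OF lm[OF ab] ast1 v1, of c1] by linarith
    then have "Ipoly M c2 x (x + d) - Ipoly M c1 x (x + d) \<le> 0" using \<beta> by simp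
    then have i1: "d * (- A) * (B - M * d) \<le> 0"
      unfolding Ipoly_diff A_def B_def by (simp add: algebra_simps)
    have ast2: "a < x - d" "x - d < x" "x < b" using d px xq by (auto simp: a_def b_def d0_def)
    have v2: "AE y in lebesgue. y \<in> {x - d<..<x} \<longrightarrow> v y = c1" using c1 by eventually_elim (use d in \<open>auto simp: d0_def\<close>)
    let ?u2 = "\<lambda>z. if z \<in> {x - d<..<x} then c2 else v z"
    have "AE y in lebesgue. y \<in> {x - min (q - x) d<..<x} \<longrightarrow> ?u2 y = c2" by (rule AE_I2) auto
    moreover have "AE y in lebesgue. y \<in> {x<..<x + min (q - x) d} \<longrightarrow> ?u2 y = c2" using c2 by eventually_elim auto
    ultimately have "x \<notin> jump_set ?u2" using same_sides_nj[of "min (q - x) d"] xq d by auto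
    then have "jump_set ?u2 \<inter> {a<..<b} \<subseteq> (J \<inter> {a<..<b} - {x}) \<union> {x - d}"
      using replace_lemma(1)[OF ast2 finJ v2, of c2] by auto
    then have "card (jump_set ?u2 \<inter> {a<..<b}) \<le> card (J \<inter> {a<..<b})"
      using card_swap[OF finJ xab] by blast
    then have "\<alpha> * card (jump_set ?u2 \<inter> {a<..<b}) \<le> \<alpha> * card (J \<inter> {a<..<b})"
      using \<alpha> by (intro mult_left_mono) auto
    then have "\<beta> * Ipoly M c1 (x - d) x \<le> \<beta> * Ipoly M c2 (x - d) x"
      using local_min_replace[OF lm[OF ab] ast2 v2, of c2] by linarith
    then have "Ipoly M c1 (x - d) x - Ipoly M c2 (x - d) x \<le> 0" using \<beta> by simp
    then have i2: "d * A * (B + M * d) \<le> 0"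
      unfolding Ipoly_diff A_def B_def by (simp add: algebra_simps)
    have "d * (A * B - A * M * d) = - (d * (- A) * (B - M * d))" by (simp add: algebra_simps)
    then have "d * (A * B - A * M * d) \<ge> 0" using i1 by linarith
    then have "A * B - A * M * d \<ge> 0" using d by (simp add: zero_le_mult_iff)
    then have f1: "A * B \<ge> A * M * d" by simp
    have "d * (A * B + A * M * d) = d * A * (B + M * d)" by (simp add: algebra_simps)
    then have "d * (A * B + A * M * d) \<le> 0" using i2 by linarith
    then have "A * B + A * M * d \<le> 0" using d by (simp add: mult_le_0_iff)
    then have f2: "A * B \<le> - A * M * d" by simp
    have f3: "\<bar>A * M * d\<bar> = \<bar>A * M\<bar> * d" using d by (simp add: abs_mult)
    have "A * M * d \<le> \<bar>A * M * d\<bar>" "- (A * M * d) \<le> \<bar>A * M * d\<bar>" by auto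
    then show ?thesis using f1 f2 f3 by (simp add: abs_le_iff)
  qed
  have "A * B = 0" by (rule small_bound[OF bound d0]) auto
  then have "B = 0" using ne by (simp add: A_def)
  then show ?thesis by (simp add: B_def)
qed

end


context elm begin

lemma gap:
  assumes "p < x" "x < q" "p \<in> J" "x \<in> J" "q \<in> J" "J \<inter> {p<..<x} = {}" "J \<inter> {x<..<q} = {}" "M \<noteq> 0"
  shows "x - p = q - x"
proof -
  obtain c1 where c1: "AE y in lebesgue. y \<in> {p<..<x} \<longrightarrow> v y = c1" using piece_const[OF assms(1,6)] by blast
  obtain c2 where c2: "AE y in lebesgue. y \<in> {x<..<q} \<longrightarrow> v y = c2" using piece_const[OF assms(2,7)] by blast
  have e1: "c1 = M * (p + x) / 2" by (rule centered[OF assms(1,3,4,6) c1])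
  have e2: "c2 = M * (x + q) / 2" by (rule centered[OF assms(2,4,5,7) c2])
  have "c1 + c2 = 2 * M * x" by (rule midpoint[OF assms(1,2,4) c1 c2])
  then have "M * p + M * q + 2 * M * x = 4 * M * x" unfolding e1 e2 by (simp add: field_simps)
  then have "M * (p + q - 2 * x) = 0" by (simp add: algebra_simps)
  then show ?thesis using assms(8) by simp
qed

lemma jumps_right: "M \<noteq> 0 \<Longrightarrow> \<exists>j\<in>J. j > x"
  using no_jump_right[of x] by blast

lemma jumps_left: "M \<noteq> 0 \<Longrightarrow> \<exists>j\<in>J. j < x"
  using no_jump_left[of x] by blast

lemma chain:
  assumes M: "M \<noteq> 0" and x0: "x0 \<in> J" "q0 \<in> J" "x0 < q0" "J \<inter> {x0<..<q0} = {}"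
  defines "L \<equiv> q0 - x0"
  shows "x0 + of_int k * L \<in> J \<and> J \<inter> {x0 + of_int k * L<..<x0 + of_int k * L + L} = {}"
proof -
  have L: "L > 0" using x0 by (simp add: L_def)
  have P: "x0 + real n * L \<in> J \<and> x0 + real n * L + L \<in> J \<and> J \<inter> {x0 + real n * L<..<x0 + real n * L + L} = {}" for n
  proof (induction n)
    case 0
    then show ?case using x0 by (simp add: L_def)
  next
    case (Suc n)
    define y where "y = x0 + real n * L + L"
    have y: "y \<in> J" using Suc y_def by simp
    obtain j where "j \<in> J" "j > y" using jumps_right[OF M] by blast
    then obtain q where q: "q \<in> J" "q > y" "J \<inter> {y<..<q} = {}" using next_jump by blast
    have "y - (x0 + real n * L) = q - y"
      by (rule gap) (use Suc q y L M in \<open>auto simp: y_def\<close>)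
    then have qy: "q = y + L" by (simp add: y_def)
    have e: "x0 + real (Suc n) * L = y" by (simp add: y_def algebra_simps)
    show ?case unfolding e using y q qy by simp
  qed
  have Q: "x0 - real n * L \<in> J \<and> x0 - real n * L + L \<in> J \<and> J \<inter> {x0 - real n * L<..<x0 - real n * L + L} = {}" for n
  proof (induction n)
    case 0
    then show ?case using x0 by (simp add: L_def)
  next
    case (Suc n)
    define y where "y = x0 - real n * L"
    have y: "y \<in> J" using Suc y_def by simp
    obtain j where "j \<in> J" "j < y" using jumps_left[OF M] by blast
    then obtain p where p: "p \<in> J" "p < y" "J \<inter> {p<..<y} = {}" using prev_jump by blast
    have "y - p = (y + L) - y"
      by (rule gap) (use Suc p y L M in \<open>auto simp: y_def\<close>)
    then have py: "p = y - L" by simp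
    have e: "x0 - real (Suc n) * L = y - L" by (simp add: y_def algebra_simps)
    show ?case unfolding e using y p py by simp
  qed
  show ?thesis
  proof (cases "k \<ge> 0")
    case True
    then obtain n where "k = int n" by (rule nonneg_int_cases)
    then show ?thesis using P[of n] by simp
  next
    case False
    then have "0 \<le> - k" by simp
    then obtain n where "- k = int n" by (rule nonneg_int_cases)
    then have "k = - int n" by simp
    then have "of_int k * L = - (real n * L)" by simp
    then show ?thesis using Q[of n] by simp
  qed
qed

lemma AE_is_Z:
  assumes M: "M \<noteq> 0"
  shows "\<exists>L cz. L > 0 \<and> (AE y in lebesgue. v y = Zs M L cz y)"
proof -
  obtain x0 where x0: "x0 \<in> J" using jumps_right[OF M] by blast
  obtain j where j: "j \<in> J" "j > x0" using jumps_right[OF M] by blast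
  obtain q0 where q0: "q0 \<in> J" "q0 > x0" "J \<inter> {x0<..<q0} = {}" using next_jump[OF j] by blast
  define L where "L = q0 - x0"
  have L: "L > 0" using q0 by (simp add: L_def)
  note ch = chain[OF M x0 q0(1,2,3), folded L_def]
  have pieces: "AE y in lebesgue. y \<in> {x0 + of_int k * L<..<x0 + of_int k * L + L} \<longrightarrow>
                 v y = M * (x0 + of_int k * L + L/2)" for k
  proof -
    let ?p = "x0 + of_int k * L"
    have ch1: "?p \<in> J" "J \<inter> {?p<..<?p + L} = {}" using ch[of k] by auto
    have ch2: "?p + L \<in> J" using ch[of "k+1"] by (simp add: algebra_simps)
    obtain c where c: "AE y in lebesgue. y \<in> {?p<..<?p + L} \<longrightarrow> v y = c"
      using piece_const[OF _ ch1(2)] L by auto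
    have "c = M * (?p + (?p + L)) / 2" by (rule centered) (use L ch1 ch2 c in auto)
    then have "c = M * (?p + L/2)" by (simp add: algebra_simps)
    then show ?thesis using c by simp
  qed
  have A1: "AE y in lebesgue. \<forall>k\<in>(UNIV::int set). y \<in> {x0 + of_int k * L<..<x0 + of_int k * L + L} \<longrightarrow>
                 v y = M * (x0 + of_int k * L + L/2)"
    using pieces by (subst AE_ball_countable) auto
  have A2: "AE y in lebesgue. y \<notin> range (\<lambda>k::int. x0 + of_int k * L)"
    by (rule AE_not_countable) auto
  have "AE y in lebesgue. v y = Zs M L (x0 + L/2) y"
    using A1 A2
  proof eventually_elim
    case (elim y)
    define k where "k = \<lfloor>(y - x0) / L\<rfloor>"
    have k1: "of_int k \<le> (y - x0) / L" "(y - x0) / L < of_int k + 1" unfolding k_def by linarith+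
    then have k2: "x0 + of_int k * L \<le> y" "y < x0 + of_int k * L + L" using L by (auto simp: field_simps)
    have "y \<noteq> x0 + of_int k * L" using elim(2) by auto
    then have "y \<in> {x0 + of_int k * L<..<x0 + of_int k * L + L}" using k2 by auto
    then have "v y = M * (x0 + of_int k * L + L/2)" using elim(1) by auto
    moreover have "Zs M L (x0 + L/2) y = M * (x0 + L/2 + of_int k * L)"
      by (rule Z_on) (use L k2 in auto)
    ultimately show ?case by (simp add: algebra_simps)
  qed
  then show ?thesis using L by blast
qed

lemma M0_zero:
  assumes M: "M = 0"
  shows "AE y in lebesgue. v y = 0"
proof -
  have right: "\<exists>e>0. AE y in lebesgue. y \<in> {x<..<x+e} \<longrightarrow> v y = 0" if xJ: "x \<in> J" for x
  proof (cases "\<exists>j\<in>J. j > x")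
    case True
    then obtain j where "j \<in> J" "j > x" by blast
    then obtain q where q: "q \<in> J" "q > x" "J \<inter> {x<..<q} = {}" using next_jump by blast
    obtain c where c: "AE y in lebesgue. y \<in> {x<..<q} \<longrightarrow> v y = c" using piece_const[OF q(2,3)] by blast
    have "c = M * (x + q) / 2" by (rule centered[OF q(2) xJ q(1,3) c])
    then show ?thesis using c q M by (intro exI[of _ "q - x"]) auto
  next
    case False
    from no_jump_right[OF this] obtain c where c: "AE y in lebesgue. y \<in> {x<..} \<longrightarrow> v y = c" "c = 0" by blast
    have "AE y in lebesgue. y \<in> {x<..<x+1} \<longrightarrow> v y = 0" using c(1) by eventually_elim (use c(2) in auto)
    then show ?thesis by (intro exI[of _ 1]) auto
  qed
  have left: "\<exists>e>0. AE y in lebesgue. y \<in> {x-e<..<x} \<longrightarrow> v y = 0" if xJ: "x \<in> J" for x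
  proof (cases "\<exists>j\<in>J. j < x")
    case True
    then obtain j where "j \<in> J" "j < x" by blast
    then obtain p where p: "p \<in> J" "p < x" "J \<inter> {p<..<x} = {}" using prev_jump by blast
    obtain c where c: "AE y in lebesgue. y \<in> {p<..<x} \<longrightarrow> v y = c" using piece_const[OF p(2,3)] by blast
    have "c = M * (p + x) / 2" by (rule centered[OF p(2) p(1) xJ p(3) c])
    then show ?thesis using c p M by (intro exI[of _ "x - p"]) auto
  next
    case False
    from no_jump_left[OF this] obtain c where c: "AE y in lebesgue. y \<in> {..<x} \<longrightarrow> v y = c" "c = 0" by blast
    have "AE y in lebesgue. y \<in> {x-1<..<x} \<longrightarrow> v y = 0" using c(1) by eventually_elim (use c(2) in auto)
    then show ?thesis by (intro exI[of _ 1]) auto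
  qed
  have nJ: "J = {}"
  proof (rule ccontr)
    assume "J \<noteq> {}"
    then obtain x where xJ: "x \<in> J" by blast
    obtain e1 where e1: "e1 > 0" "AE y in lebesgue. y \<in> {x<..<x+e1} \<longrightarrow> v y = 0" using right[OF xJ] by blast
    obtain e2 where e2: "e2 > 0" "AE y in lebesgue. y \<in> {x-e2<..<x} \<longrightarrow> v y = 0" using left[OF xJ] by blast
    have "AE y in lebesgue. y \<in> {x - min e1 e2<..<x} \<longrightarrow> v y = 0" using e2(2) by eventually_elim auto
    moreover have "AE y in lebesgue. y \<in> {x<..<x + min e1 e2} \<longrightarrow> v y = 0" using e1(2) by eventually_elim auto
    ultimately have "x \<notin> J" using same_sides_nj[of "min e1 e2"] e1 e2 by auto
    then show False using xJ by simp
  qed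
  have "\<exists>c. AE y in lebesgue. y \<in> UNIV \<longrightarrow> v y = c"
    by (rule no_jump_const) (use nJ in auto)
  then obtain c where c: "AE y in lebesgue. v y = c" by auto
  have "AE y in lebesgue. y \<in> {0<..} \<longrightarrow> v y = c" using c by eventually_elim auto
  from unb_right[OF this] have "c = 0" by simp
  then show ?thesis using c by simp
qed

end


lemma phi_diff:
  fixes K H x :: real
  assumes "x > 0" "H > 0"
  shows "(16*K*H^3 + K*x^3)/x - (16*K*H^3 + K*(2*H)^3)/(2*H) = K*(x - 2*H)^2*(x + 4*H)/x"
  using assms by (simp add: field_simps power2_eq_square power3_eq_cube)

lemma two_H_unique:
  fixes K H L \<alpha> :: real
  assumes K: "K > 0" and H: "H > 0" and L: "L > 0" and \<alpha>: "\<alpha> = 16*K*H^3"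
    and ineq: "\<And>N N'::nat. 1 \<le> N \<Longrightarrow> 1 \<le> N' \<Longrightarrow>
        real N * (\<alpha> + K*L^3) \<le> real N' * (\<alpha> + K*(real N * L / real N')^3)"
  shows "L = 2*H"
proof (rule ccontr)
  assume ne: "L \<noteq> 2*H"
  define \<phi> where "\<phi> x = (\<alpha> + K*x^3)/x" for x
  have pd: "\<phi> x - \<phi> (2*H) = K*(x - 2*H)^2*(x + 4*H)/x" if "x > 0" for x
    unfolding \<phi>_def \<alpha> using phi_diff[OF that H] .
  define \<delta> where "\<delta> = \<phi> L - \<phi> (2*H)"
  have \<delta>: "\<delta> > 0" unfolding \<delta>_def pd[OF L] using K H L ne by (intro divide_pos_pos mult_pos_pos) auto
  obtain N' :: nat where N': "L / min H 1 + 3*K*L/\<delta> + 1 < real N'" using reals_Archimedean2 by blast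
  have pos1: "L / min H 1 \<ge> 0" "3*K*L/\<delta> \<ge> 0" using L K H \<delta> by auto
  then have N'1: "real N' > 1" "N' \<ge> 1" using N' by linarith+
  define \<epsilon> where "\<epsilon> = L / real N'"
  have \<epsilon>0: "\<epsilon> > 0" using L N'1 by (simp add: \<epsilon>_def)
  have "L / min H 1 < real N'" using N' pos1 by linarith
  then have "L < real N' * min H 1" using H by (simp add: field_simps)
  moreover have m1: "real N' * min H 1 \<le> real N' * H" by (rule mult_left_mono) auto
  moreover have m2: "real N' * min H 1 \<le> real N' * 1" by (rule mult_left_mono) auto
  ultimately have "L < H * real N'" "L < real N'" by (simp_all add: mult.commute)
  then have "\<epsilon> < H" "\<epsilon> < 1" using N'1 by (simp_all add: \<epsilon>_def pos_divide_less_eq)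
  then have \<epsilon>1: "\<epsilon> < min H 1" by simp
  have "3*K*L/\<delta> < real N'" using N' pos1 by linarith
  then have "3*K*L < real N' * \<delta>" using \<delta> by (simp add: field_simps)
  then have \<epsilon>2: "3*K*\<epsilon> < \<delta>" using N'1 by (simp add: \<epsilon>_def field_simps)
  define N :: nat where "N = nat \<lceil>2*H*real N'/L\<rceil>"
  have "2*H*real N'/L > 0" using H L N'1 by simp
  then have "real N = of_int \<lceil>2*H*real N'/L\<rceil>" unfolding N_def by simp
  then have RN: "real N \<ge> 2*H*real N'/L" "real N < 2*H*real N'/L + 1"
    using ceiling_correct[of "2*H*real N'/L"] by linarith+
  then have "real N > 0" using \<open>2*H*real N'/L > 0\<close> by linarith
  then have N1: "N \<ge> 1" by simp
  define l where "l = real N * L / real N'"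
  have l1: "l \<ge> 2*H" using RN(1) L N'1 by (simp add: l_def field_simps)
  have l2: "l < 2*H + \<epsilon>" using RN(2) L N'1 by (simp add: l_def \<epsilon>_def field_simps)
  have lpos: "l > 0" using l1 H by simp
  have "real N * (\<alpha> + K*L^3) \<le> real N' * (\<alpha> + K*l^3)" using ineq[OF N1 N'1(2)] by (simp add: l_def)
  moreover have "real N * (\<alpha> + K*L^3) = real N * L * \<phi> L" using L by (simp add: \<phi>_def)
  moreover have "real N' * (\<alpha> + K*l^3) = real N * L * \<phi> l"
  proof -
    have r: "real N * L / l = real N'" using lpos N'1 N1 L by (simp add: l_def field_simps)
    have "real N * L * \<phi> l = (real N * L / l) * (\<alpha> + K*l^3)" by (simp add: \<phi>_def)
    then show ?thesis unfolding r by simp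
  qed
  ultimately have "real N * L * \<phi> L \<le> real N * L * \<phi> l" by simp
  moreover have "real N * L > 0" using N1 L by simp
  ultimately have phiL: "\<phi> L \<le> \<phi> l" using mult_le_cancel_left_pos by blast
  have "(l - 2*H)^2 \<le> \<epsilon>^2" using l1 l2 by (intro power_mono) auto
  also have "\<dots> \<le> \<epsilon>" using \<epsilon>0 \<epsilon>1 by (simp add: power2_eq_square mult_le_cancel_left1)
  finally have a1: "(l - 2*H)^2 \<le> \<epsilon>" .
  have a2: "(l + 4*H)/l \<le> 3" using lpos l1 by (simp add: field_simps)
  have "\<phi> l - \<phi> (2*H) = K * (l - 2*H)^2 * ((l + 4*H)/l)" using pd[OF lpos] by simp
  also have "\<dots> \<le> K * \<epsilon> * 3"
    using a1 a2 K lpos H \<epsilon>0 by (intro mult_mono) auto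
  finally have "\<phi> l - \<phi> (2*H) < \<delta>" using \<epsilon>2 by simp
  then show False using phiL by (simp add: \<delta>_def)
qed

lemma Zs_shift:
  assumes "l > 0"
  shows "Zs M l (cz + of_int k * l) = Zs M l cz"
proof
  fix x
  have eq: "(x - (cz + of_int k * l)) / l + 1/2 = ((x - cz) / l + 1/2) - of_int k"
    using assms by (simp add: field_simps)
  have fl: "\<lfloor>(x - (cz + of_int k * l)) / l + 1/2\<rfloor> = \<lfloor>(x - cz) / l + 1/2\<rfloor> - k"
    unfolding eq by (rule floor_diff_of_int)
  show "Zs M l (cz + of_int k * l) x = Zs M l cz x"
    unfolding Zs_def fl by (simp add: algebra_simps)
qed

lemma Obl_Z:
  assumes "H > 0" "V = M * H"
  shows "(\<lambda>x. staircase_HV H V (x - H * t) + V * t) = Zs M (2*H) (H * t)"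
proof
  fix x
  have eq: "((x - H * t) / H + 1) / 2 = (x - H * t) / (2 * H) + 1/2" using assms by (simp add: field_simps)
  show "staircase_HV H V (x - H * t) + V * t = Zs M (2*H) (H * t) x"
    unfolding staircase_HV_def staircase_def Zs_def assms(2) eq by (simp add: algebra_simps)
qed

context calib begin

lemma L_is_2H:
  assumes L: "L > 0" and E: "entire_local_min \<alpha> \<beta> (\<lambda>x. M * x) (Zs M L cz)"
  shows "L = 2*H"
proof (rule two_H_unique[of "\<beta> * M^2 / 12" H L \<alpha>])
  show "\<beta> * M^2 / 12 > 0" using \<beta> M by simp
  show "H > 0" "L > 0" using H L by auto
  show "\<alpha> = 16 * (\<beta> * M^2 / 12) * H^3" using \<alpha> by simp
  fix N N' :: nat assume N: "1 \<le> N" "1 \<le> N'"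
  define l where "l = real N * L / real N'"
  have lpos: "l > 0" using N L by (simp add: l_def)
  have endp: "cz + real N' * l = cz + real N * L" using N by (simp add: l_def)
  have ab: "cz < cz + real N * L" using N L by simp
  have lm: "local_min \<alpha> \<beta> (\<lambda>x. M * x) cz (cz + real N * L) (Zs M L cz)"
    using E ab by (simp add: entire_local_min_def)
  have st: "step_on cz (cz + real N * L) (Zs M l cz)"
    using Z_S_loc[OF lpos] ab by (simp add: S_loc_def)
  have tl: "trace_left cz (Zs M l cz) = trace_left cz (Zs M L cz)"
    using Z_traces_center(1)[OF lpos, of cz 0 M] Z_traces_center(1)[OF L, of cz 0 M] by simp
  have tr: "trace_right (cz + real N * L) (Zs M l cz) = trace_right (cz + real N * L) (Zs M L cz)"
    using Z_traces_center(2)[OF lpos, of cz "int N'" M] Z_traces_center(2)[OF L, of cz "int N" M] endp by simp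
  have "G \<alpha> \<beta> (\<lambda>x. M * x) cz (cz + real N * L) (Zs M L cz) \<le> G \<alpha> \<beta> (\<lambda>x. M * x) cz (cz + real N * L) (Zs M l cz)"
    using lm st tl tr unfolding local_min_def by blast
  moreover have "G \<alpha> \<beta> (\<lambda>x. M * x) cz (cz + real N * L) (Zs M L cz) = real N * (\<alpha> + \<beta> * M^2 * L^3 / 12)"
    by (rule Z_cost[OF L M N(1)])
  moreover have "G \<alpha> \<beta> (\<lambda>x. M * x) cz (cz + real N * L) (Zs M l cz) = real N' * (\<alpha> + \<beta> * M^2 * l^3 / 12)"
    using Z_cost[OF lpos M N(2), of \<alpha> \<beta> cz] endp by simp
  ultimately show "real N * (\<alpha> + \<beta> * M^2 / 12 * L^3) \<le> real N' * (\<alpha> + \<beta> * M^2 / 12 * (real N * L / real N')^3)"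
    by (simp add: l_def)
qed

end


lemma zero_elm:
  assumes "\<alpha> \<ge> 0" "\<beta> \<ge> 0" "M = 0"
  shows "entire_local_min \<alpha> \<beta> (\<lambda>x. M * x) (\<lambda>x. 0)"
proof -
  have J: "jump_set (\<lambda>x::real. 0::real) = {}" using not_jump[of 1 _ "\<lambda>x. 0" 0] by auto
  have G0: "G \<alpha> \<beta> (\<lambda>x. M * x) a b (\<lambda>x. 0) = 0" for a b unfolding G_def J using assms(3) by simp
  show ?thesis
    unfolding entire_local_min_def S_loc_def local_min_def step_on_def
    using J G0 G_nonneg[OF assms(1,2)] by auto
qed

theorem proposition4p4:
  fixes \<alpha> \<beta> M H V :: real
  assumes "\<alpha> > 0" and "\<beta> > 0"
    and "H = 1/2 * root 3 (6 * \<alpha> / (\<beta> * M\<^sup>2))" and "V = M * H"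
  shows "\<forall>u. entire_local_min \<alpha> \<beta> (\<lambda>x. M * x) u \<longleftrightarrow>
           (\<exists>w \<in> Obl H V. AE x in lebesgue. u x = w x)"
proof (cases "M = 0")
  case True
  then have H0: "H = 0" "V = 0" using assms(3,4) by auto
  have Obl0: "Obl H V = {(\<lambda>x. 0)}"
  proof -
    have "Obl H V = {(\<lambda>x. 0) | t::real. t \<in> {-1..1}}"
      unfolding Obl_def H0 staircase_HV_def by simp
    also have "\<dots> = {(\<lambda>x. 0)}" by (auto intro: exI[of _ 0])
    finally show ?thesis .
  qed
  have E0: "entire_local_min \<alpha> \<beta> (\<lambda>x. M * x) (\<lambda>x. 0)"
    using zero_elm[of \<alpha> \<beta> M] assms True by simp
  show ?thesis
  proof (intro allI iffI)
    fix u assume u: "entire_local_min \<alpha> \<beta> (\<lambda>x. M * x) u"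
    interpret elm \<alpha> \<beta> M u using assms u by unfold_locales auto
    have "AE x in lebesgue. u x = 0" by (rule M0_zero[OF True])
    then show "\<exists>w\<in>Obl H V. AE x in lebesgue. u x = w x" unfolding Obl0 by auto
  next
    fix u assume "\<exists>w\<in>Obl H V. AE x in lebesgue. u x = w x"
    then have "AE x in lebesgue. u x = 0" unfolding Obl0 by auto
    then show "entire_local_min \<alpha> \<beta> (\<lambda>x. M * x) u" using AE_elm_eq[of u "\<lambda>x. 0"] E0 by simp
  qed
next
  case False
  define r where "r = root 3 (6 * \<alpha> / (\<beta> * M\<^sup>2))"
  have rpos: "r > 0" unfolding r_def using assms(1,2) False by (intro real_root_gt_zero) auto
  have r3: "r^3 = 6 * \<alpha> / (\<beta> * M\<^sup>2)" unfolding r_def by (rule odd_real_root_pow) simp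
  have Hr: "H = r / 2" using assms(3) by (simp add: r_def)
  have Hpos: "H > 0" using rpos Hr by simp
  have "H^3 = r^3 / 8" unfolding Hr by (simp add: power_divide)
  then have H3: "H^3 = 6 * \<alpha> / (\<beta> * M\<^sup>2) / 8" using r3 by simp
  have \<alpha>H: "\<alpha> = 4/3 * \<beta> * M^2 * H^3" unfolding H3 using False assms(2) by (simp add: field_simps)
  interpret calib \<alpha> \<beta> M H using False Hpos assms(2) \<alpha>H by unfold_locales auto
  have OblZ: "w \<in> Obl H V \<Longrightarrow> \<exists>t. w = Zs M (2*H) (H * t) \<and> t \<in> {-1..1}" for w
    unfolding Obl_def using Obl_Z[OF Hpos assms(4)] by auto
  show ?thesis
  proof (intro allI iffI)
    fix u assume u: "entire_local_min \<alpha> \<beta> (\<lambda>x. M * x) u"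
    interpret elm \<alpha> \<beta> M u using assms u by unfold_locales auto
    obtain L cz where L: "L > 0" "AE y in lebesgue. u y = Zs M L cz y" using AE_is_Z[OF False] by blast
    have EZ: "entire_local_min \<alpha> \<beta> (\<lambda>x. M * x) (Zs M L cz)" using AE_elm_eq[OF L(2)] u by simp
    have L2: "L = 2*H" by (rule L_is_2H[OF L(1) EZ])
    define k where "k = \<lfloor>(cz / H + 1) / 2\<rfloor>"
    define t where "t = cz / H - 2 * of_int k"
    have k1: "of_int k \<le> (cz / H + 1) / 2" "(cz / H + 1) / 2 < of_int k + 1" unfolding k_def by linarith+
    have t1: "t \<in> {-1..1}" using k1 by (auto simp: t_def)
    have czt: "cz = H * t + of_int k * (2*H)" using Hpos by (simp add: t_def field_simps)
    have "Zs M (2*H) cz = Zs M (2*H) (H * t)" unfolding czt by (rule Zs_shift) (use Hpos in simp)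
    then have "AE y in lebesgue. u y = Zs M (2*H) (H * t) y" using L(2) L2 by simp
    moreover have "(\<lambda>x. staircase_HV H V (x - H * t) + V * t) \<in> Obl H V"
      unfolding Obl_def using t1 by blast
    ultimately show "\<exists>w\<in>Obl H V. AE x in lebesgue. u x = w x"
      using Obl_Z[OF Hpos assms(4), of t] by auto
  next
    fix u assume "\<exists>w\<in>Obl H V. AE x in lebesgue. u x = w x"
    then obtain w where w: "w \<in> Obl H V" "AE x in lebesgue. u x = w x" by blast
    obtain t where t: "w = Zs M (2*H) (H * t)" using OblZ[OF w(1)] by blast
    have "entire_local_min \<alpha> \<beta> (\<lambda>x. M * x) w" unfolding t by (rule Z_elm)
    then show "entire_local_min \<alpha> \<beta> (\<lambda>x. M * x) u" using AE_elm_eq[OF w(2)] by simp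
  qed
qed


end
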